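(* Let $K=\mathbb{F}_q$ be a finite field, $S=K[t_1,\ldots,t_s]$, let $\mathbb{X}\subset\mathbb{P}^{s-1}$ with $|\mathbb{X}|\geq 2$, let $I=I(\mathbb{X})$, and let $\prec$ be a monomial order on $S$. Then for every $d\geq 1$, $$\delta_{\mathbb{X}}(d)=\deg(S/I)-\max\{\deg(S/(I,f)): f\in\mathcal{F}_{\prec,d}\}\geq 1.$$
   Context: $I(\mathbb{X})$ is the ideal generated by the homogeneous polynomials vanishing on $\mathbb{X}$; $V_{\mathbb{X}}(f)$ is the set of zeros of a form $f$ in $\mathbb{X}$. $\delta_{\mathbb{X}}(d)$ is the minimum distance of the projective Reed–Muller-type code of degree $d$ on $\mathbb{X}$, i.e. $\delta_{\mathbb{X}}(d)=\min\{|\mathbb{X}|-|V_{\mathbb{X}}(f)|: f\in S_d,\ f\notin I(\mathbb{X})\}$. If $\{t^{a_1},\ldots,t^{a_n}\}$ is the set of standard monomials of degree $d$ (monomials of degree $d$ not in the initial ideal $\mathrm{in}_\prec(I)$), then $\mathcal{F}_{\prec,d}=\{f=\sum_i\lambda_it^{a_i}: \lambda_i\in K,\ f\neq0,\ (I\colon f)\neq I\}$, where $(I\colon f)=\{h\in S:hf\in I\}$. For a graded ideal $J$ with Hilbert function $H_J(d)=\dim_K(S_d/J_d)$ and $k=\dim(S/J)$, $\deg(S/J)=(k-1)!\lim_{d\to\infty}H_J(d)/d^{k-1}$ if $k\geq1$ and $\dim_K(S/J)$ if $k=0$. *)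

theory Defs
  imports Complex_Main "HOL-Library.Poly_Mapping"
begin

text \<open>Polynomials in the variables t_0,...,t_(s-1) over a field K:
  finitely supported maps from monomials (exponent vectors nat =>0 nat) to K.\<close>

type_synonym 'a mpoly = "(nat \<Rightarrow>\<^sub>0 nat) \<Rightarrow>\<^sub>0 'a"

definition Pring :: "nat \<Rightarrow> ('a::field) mpoly set" where
  "Pring s = {p. \<forall>m\<in>Poly_Mapping.keys p. Poly_Mapping.keys m \<subseteq> {..<s}}"

definition mdeg :: "(nat \<Rightarrow>\<^sub>0 nat) \<Rightarrow> nat" where
  "mdeg m = (\<Sum>i\<in>Poly_Mapping.keys m. Poly_Mapping.lookup m i)"

definition Sd :: "nat \<Rightarrow> nat \<Rightarrow> ('a::field) mpoly set" where
  "Sd s d = {p \<in> Pring s. \<forall>m\<in>Poly_Mapping.keys p. mdeg m = d}"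

definition is_form :: "nat \<Rightarrow> ('a::field) mpoly \<Rightarrow> bool" where
  "is_form s f \<longleftrightarrow> (\<exists>d. f \<in> Sd s d)"

definition gen_ideal :: "nat \<Rightarrow> ('a::field) mpoly set \<Rightarrow> 'a mpoly set" where
  "gen_ideal s G = {p. \<exists>F h. finite F \<and> F \<subseteq> G \<and> (\<forall>g\<in>F. h g \<in> Pring s)
                          \<and> p = (\<Sum>g\<in>F. h g * g)}"

definition eval_mpoly :: "('a::field) mpoly \<Rightarrow> (nat \<Rightarrow> 'a) \<Rightarrow> 'a" where
  "eval_mpoly p v = (\<Sum>m\<in>Poly_Mapping.keys p. Poly_Mapping.lookup p m * (\<Prod>i\<in>Poly_Mapping.keys m. v i ^ Poly_Mapping.lookup m i))"

text \<open>Projective space P^(s-1) over K: a point is the set of nonzero scalar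
  multiples of a nonzero vector of K^s.\<close>
definition proj_space :: "nat \<Rightarrow> (nat \<Rightarrow> 'a::field) set set" where
  "proj_space s = {{(\<lambda>i. c * v i) | c. c \<noteq> 0} | v.
                     (\<forall>i\<ge>s. v i = 0) \<and> v \<noteq> (\<lambda>_. 0)}"

definition vanishes_at :: "('a::field) mpoly \<Rightarrow> (nat \<Rightarrow> 'a) set \<Rightarrow> bool" where
  "vanishes_at f P \<longleftrightarrow> (\<forall>v\<in>P. eval_mpoly f v = 0)"

definition vanishing_ideal :: "nat \<Rightarrow> (nat \<Rightarrow> 'a::field) set set \<Rightarrow> 'a mpoly set" where
  "vanishing_ideal s X = gen_ideal s {f. is_form s f \<and> (\<forall>P\<in>X. vanishes_at f P)}"

definition zeros_in :: "(nat \<Rightarrow> 'a::field) set set \<Rightarrow> 'a mpoly \<Rightarrow> (nat \<Rightarrow> 'a) set set" where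
  "zeros_in X f = {P \<in> X. vanishes_at f P}"

text \<open>Minimum distance of the projective Reed-Muller-type code of degree d on X.\<close>
definition min_dist :: "nat \<Rightarrow> (nat \<Rightarrow> 'a::field) set set \<Rightarrow> nat \<Rightarrow> nat" where
  "min_dist s X d = Min {card X - card (zeros_in X f) | f.
                           f \<in> (Sd s d :: 'a mpoly set) \<and> f \<notin> vanishing_ideal s X}"

definition monomial_order :: "nat \<Rightarrow> ((nat \<Rightarrow>\<^sub>0 nat) \<Rightarrow> (nat \<Rightarrow>\<^sub>0 nat) \<Rightarrow> bool) \<Rightarrow> bool" where
  "monomial_order s ord \<longleftrightarrow>
     (let M = {m. Poly_Mapping.keys m \<subseteq> {..<s}} in
       (\<forall>a\<in>M. \<not> ord a a) \<and>
       (\<forall>a\<in>M. \<forall>b\<in>M. \<forall>c\<in>M. ord a b \<longrightarrow> ord b c \<longrightarrow> ord a c) \<and>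
       (\<forall>a\<in>M. \<forall>b\<in>M. a = b \<or> ord a b \<or> ord b a) \<and>
       (\<forall>a\<in>M. \<forall>b\<in>M. \<forall>c\<in>M. ord a b \<longrightarrow> ord (a + c) (b + c)) \<and>
       (\<forall>a\<in>M. a \<noteq> 0 \<longrightarrow> ord 0 a))"

definition lead_mono :: "((nat \<Rightarrow>\<^sub>0 nat) \<Rightarrow> (nat \<Rightarrow>\<^sub>0 nat) \<Rightarrow> bool) \<Rightarrow> ('a::field) mpoly
                          \<Rightarrow> (nat \<Rightarrow>\<^sub>0 nat)" where
  "lead_mono ord f = (THE m. m \<in> Poly_Mapping.keys f \<and> (\<forall>m'\<in>Poly_Mapping.keys f. m' \<noteq> m \<longrightarrow> ord m' m))"

definition init_ideal :: "nat \<Rightarrow> ((nat \<Rightarrow>\<^sub>0 nat) \<Rightarrow> (nat \<Rightarrow>\<^sub>0 nat) \<Rightarrow> bool) \<Rightarrow> ('a::field) mpoly set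
                          \<Rightarrow> 'a mpoly set" where
  "init_ideal s ord I = gen_ideal s {Poly_Mapping.single (lead_mono ord f) 1 | f. f \<in> I \<and> f \<noteq> 0}"

definition std_monos :: "nat \<Rightarrow> ((nat \<Rightarrow>\<^sub>0 nat) \<Rightarrow> (nat \<Rightarrow>\<^sub>0 nat) \<Rightarrow> bool) \<Rightarrow> ('a::field) mpoly set
                          \<Rightarrow> nat \<Rightarrow> (nat \<Rightarrow>\<^sub>0 nat) set" where
  "std_monos s ord I d = {m. Poly_Mapping.keys m \<subseteq> {..<s} \<and> mdeg m = d \<and>
                            (Poly_Mapping.single m (1::'a) \<notin> init_ideal s ord I)}"

definition colon_ideal :: "nat \<Rightarrow> ('a::field) mpoly set \<Rightarrow> 'a mpoly \<Rightarrow> 'a mpoly set" where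
  "colon_ideal s I f = {h \<in> Pring s. h * f \<in> I}"

definition F_set :: "nat \<Rightarrow> ((nat \<Rightarrow>\<^sub>0 nat) \<Rightarrow> (nat \<Rightarrow>\<^sub>0 nat) \<Rightarrow> bool) \<Rightarrow> ('a::field) mpoly set
                       \<Rightarrow> nat \<Rightarrow> 'a mpoly set" where
  "F_set s ord I d = {f. Poly_Mapping.keys f \<subseteq> std_monos s ord I d \<and> f \<noteq> 0 \<and> colon_ideal s I f \<noteq> I}"

definition kscale :: "'a::field \<Rightarrow> 'a mpoly \<Rightarrow> 'a mpoly" where
  "kscale c p = Poly_Mapping.map (\<lambda>x. c * x) p"

text \<open>Hilbert function H_J(d) = dim_K (S_d / J_d) = dim_K S_d - dim_K J_d.\<close>
definition hilbert_fun :: "nat \<Rightarrow> ('a::field) mpoly set \<Rightarrow> nat \<Rightarrow> nat" where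
  "hilbert_fun s J d = vector_space.dim kscale (Sd s d :: 'a mpoly set)
                        - vector_space.dim kscale (J \<inter> Sd s d)"

definition prime_ideal_S :: "nat \<Rightarrow> ('a::field) mpoly set \<Rightarrow> bool" where
  "prime_ideal_S s P \<longleftrightarrow> gen_ideal s P = P \<and> P \<subseteq> Pring s \<and> P \<noteq> Pring s \<and>
     (\<forall>a\<in>Pring s. \<forall>b\<in>Pring s. a * b \<in> P \<longrightarrow> a \<in> P \<or> b \<in> P)"

definition krull_dim_quot :: "nat \<Rightarrow> ('a::field) mpoly set \<Rightarrow> nat" where
  "krull_dim_quot s J = Sup {n. \<exists>P :: nat \<Rightarrow> 'a mpoly set.
       (\<forall>i\<le>n. prime_ideal_S s (P i) \<and> J \<subseteq> P i) \<and> (\<forall>i<n. P i \<subset> P (Suc i))}"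

definition deg_quot :: "nat \<Rightarrow> ('a::field) mpoly set \<Rightarrow> real" where
  "deg_quot s J = (let k = krull_dim_quot s J in
     if k \<ge> 1 then fact (k - 1) * lim (\<lambda>d. real (hilbert_fun s J d) / real d ^ (k - 1))
     else suminf (\<lambda>d. real (hilbert_fun s J d)))"

end

theory Submission
  imports Defs "HOL-Computational_Algebra.Polynomial" "HOL-Library.FuncSet"
begin


lemma mpoly_sum_singles:
  "p = (\<Sum>m\<in>Poly_Mapping.keys p. Poly_Mapping.single m (Poly_Mapping.lookup p m))"
proof (rule poly_mapping_eqI)
  fix k
  show "Poly_Mapping.lookup p k = Poly_Mapping.lookup (\<Sum>m\<in>Poly_Mapping.keys p. Poly_Mapping.single m (Poly_Mapping.lookup p m)) k"
    by (cases "k \<in> Poly_Mapping.keys p")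
       (auto simp: lookup_sum lookup_single when_def in_keys_iff sum.delta)
qed

definition gev :: "('a::zero \<Rightarrow> 'r::comm_ring_1) \<Rightarrow> ('m \<Rightarrow> 'r) \<Rightarrow> ('m \<Rightarrow>\<^sub>0 'a) \<Rightarrow> 'r" where
  "gev \<iota> \<psi> p = (\<Sum>m\<in>Poly_Mapping.keys p. \<iota> (Poly_Mapping.lookup p m) * \<psi> m)"

lemma gev_superset:
  assumes "finite A" "Poly_Mapping.keys p \<subseteq> A" "\<iota> 0 = 0"
  shows "gev \<iota> \<psi> p = (\<Sum>m\<in>A. \<iota> (Poly_Mapping.lookup p m) * \<psi> m)"
  unfolding gev_def
  by (rule sum.mono_neutral_left) (use assms in \<open>auto simp: in_keys_iff\<close>)

lemma gev_add:
  fixes p q :: "'m \<Rightarrow>\<^sub>0 'a::comm_monoid_add"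
  assumes "\<iota> 0 = 0" "\<And>a b. \<iota> (a + b) = \<iota> a + \<iota> b"
  shows "gev \<iota> \<psi> (p + q) = gev \<iota> \<psi> p + gev \<iota> \<psi> q"
proof -
  let ?A = "Poly_Mapping.keys p \<union> Poly_Mapping.keys q"
  have "gev \<iota> \<psi> (p + q) = (\<Sum>m\<in>?A. \<iota> (Poly_Mapping.lookup (p+q) m) * \<psi> m)"
    using keys_add[of p q] assms by (intro gev_superset) auto
  also have "\<dots> = (\<Sum>m\<in>?A. \<iota> (Poly_Mapping.lookup p m) * \<psi> m) + (\<Sum>m\<in>?A. \<iota> (Poly_Mapping.lookup q m) * \<psi> m)"
    by (simp add: lookup_add assms distrib_right sum.distrib)
  also have "\<dots> = gev \<iota> \<psi> p + gev \<iota> \<psi> q"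
    using assms by (simp add: gev_superset[of ?A])
  finally show ?thesis .
qed

lemma gev_zero[simp]: "gev \<iota> \<psi> 0 = 0"
  by (simp add: gev_def)

lemma gev_sum:
  fixes f :: "'i \<Rightarrow> 'm \<Rightarrow>\<^sub>0 'a::comm_monoid_add"
  assumes "\<iota> 0 = 0" "\<And>a b. \<iota> (a + b) = \<iota> a + \<iota> b"
  shows "gev \<iota> \<psi> (sum f I) = (\<Sum>i\<in>I. gev \<iota> \<psi> (f i))"
  by (induction I rule: infinite_finite_induct) (auto simp: gev_add[OF assms])

lemma gev_single:
  assumes "\<iota> 0 = 0"
  shows "gev \<iota> \<psi> (Poly_Mapping.single m c) = \<iota> c * \<psi> m"
  using assms by (auto simp: gev_def)

lemma gev_mult:
  fixes p q :: "('m::comm_monoid_add) \<Rightarrow>\<^sub>0 ('a::comm_semiring_0)"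
  assumes i0: "\<iota> 0 = 0" and ia: "\<And>a b. \<iota> (a + b) = \<iota> a + \<iota> b"
    and im: "\<And>a b. \<iota> (a * b) = \<iota> a * \<iota> b"
    and pa: "\<And>a b. \<psi> (a + b) = \<psi> a * \<psi> b"
  shows "gev \<iota> \<psi> (p * q) = gev \<iota> \<psi> p * gev \<iota> \<psi> q"
proof -
  have "p * q = (\<Sum>a\<in>Poly_Mapping.keys p. Poly_Mapping.single a (Poly_Mapping.lookup p a)) *
                (\<Sum>b\<in>Poly_Mapping.keys q. Poly_Mapping.single b (Poly_Mapping.lookup q b))"
    by (metis mpoly_sum_singles)
  also have "\<dots> = (\<Sum>a\<in>Poly_Mapping.keys p. \<Sum>b\<in>Poly_Mapping.keys q.
       Poly_Mapping.single (a + b) (Poly_Mapping.lookup p a * Poly_Mapping.lookup q b))"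
    by (simp add: sum_distrib_left sum_distrib_right mult_single sum.swap[of _ "Poly_Mapping.keys q"])
  finally have "gev \<iota> \<psi> (p * q) = (\<Sum>a\<in>Poly_Mapping.keys p. \<Sum>b\<in>Poly_Mapping.keys q.
       \<iota> (Poly_Mapping.lookup p a) * \<psi> a * (\<iota> (Poly_Mapping.lookup q b) * \<psi> b))"
    by (simp add: gev_sum[OF i0 ia] gev_single i0 im pa mult_ac)
  also have "\<dots> = gev \<iota> \<psi> p * gev \<iota> \<psi> q"
    by (simp add: gev_def sum_product)
  finally show ?thesis .
qed


abbreviation lk where "lk \<equiv> Poly_Mapping.lookup"
abbreviation ks where "ks \<equiv> Poly_Mapping.keys"
abbreviation sng where "sng \<equiv> Poly_Mapping.single"

lemma keys_add_nat: "ks (a + b :: nat \<Rightarrow>\<^sub>0 nat) = ks a \<union> ks b"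
  by (auto simp: in_keys_iff lookup_add)

lemma mdeg_superset: "finite A \<Longrightarrow> ks m \<subseteq> A \<Longrightarrow> mdeg m = (\<Sum>i\<in>A. lk m i)"
  unfolding mdeg_def by (rule sum.mono_neutral_left) (auto simp: in_keys_iff)

lemma mdeg_add: "mdeg (a + b) = mdeg a + mdeg b"
proof -
  let ?A = "ks a \<union> ks b"
  have "mdeg (a+b) = (\<Sum>i\<in>?A. lk (a+b) i)" by (rule mdeg_superset) (auto simp: keys_add_nat)
  also have "\<dots> = (\<Sum>i\<in>?A. lk a i) + (\<Sum>i\<in>?A. lk b i)" by (simp add: lookup_add sum.distrib)
  also have "\<dots> = mdeg a + mdeg b" by (simp add: mdeg_superset[of ?A])
  finally show ?thesis .
qed

lemma mdeg_zero[simp]: "mdeg 0 = 0" by (simp add: mdeg_def)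

lemma mdeg_single[simp]: "mdeg (sng i k) = k" by (simp add: mdeg_def)

definition vpow :: "(nat \<Rightarrow> 'a::comm_ring_1) \<Rightarrow> (nat \<Rightarrow>\<^sub>0 nat) \<Rightarrow> 'a" where
  "vpow v m = (\<Prod>i\<in>ks m. v i ^ lk m i)"

lemma vpow_superset: "finite A \<Longrightarrow> ks m \<subseteq> A \<Longrightarrow> vpow v m = (\<Prod>i\<in>A. v i ^ lk m i)"
  unfolding vpow_def by (rule prod.mono_neutral_left) (auto simp: in_keys_iff)

lemma vpow_add: "vpow v (a + b) = vpow v a * vpow v b"
proof -
  let ?A = "ks a \<union> ks b"
  have "vpow v (a+b) = (\<Prod>i\<in>?A. v i ^ lk (a+b) i)" by (rule vpow_superset) (auto simp: keys_add_nat)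
  also have "\<dots> = (\<Prod>i\<in>?A. v i ^ lk a i) * (\<Prod>i\<in>?A. v i ^ lk b i)"
    by (simp add: lookup_add power_add prod.distrib)
  also have "\<dots> = vpow v a * vpow v b" by (simp add: vpow_superset[of ?A])
  finally show ?thesis .
qed

lemma vpow_zero[simp]: "vpow v 0 = 1" by (simp add: vpow_def)

lemma vpow_scale: "vpow (\<lambda>i. c * v i) m = c ^ mdeg m * vpow v m"
  by (simp add: vpow_def mdeg_def power_mult_distrib prod.distrib power_sum)

lemma eval_gev: "eval_mpoly p v = gev id (vpow v) p"
  by (simp add: eval_mpoly_def gev_def vpow_def)

lemma eval_add[simp]: "eval_mpoly (p + q) v = eval_mpoly p v + eval_mpoly q v"
  by (simp add: eval_gev gev_add)

lemma eval_zero[simp]: "eval_mpoly 0 v = 0"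
  by (simp add: eval_gev)

lemma eval_mult[simp]: "eval_mpoly (p * q) v = eval_mpoly p v * eval_mpoly q v"
  by (simp add: eval_gev gev_mult vpow_add)

lemma eval_single[simp]: "eval_mpoly (sng m c) v = c * vpow v m"
  by (simp add: eval_gev gev_single)

lemma eval_sum: "eval_mpoly (sum f A) v = (\<Sum>i\<in>A. eval_mpoly (f i) v)"
  by (simp add: eval_gev gev_sum)

lemma eval_uminus[simp]: "eval_mpoly (- p) v = - eval_mpoly p v"
proof -
  have "eval_mpoly (- p + p) v = 0" by simp
  then show ?thesis by (simp only: eval_add) (simp add: eq_neg_iff_add_eq_0)
qed

lemma eval_diff[simp]: "eval_mpoly (p - q) v = eval_mpoly p v - eval_mpoly q v"
  by (metis diff_conv_add_uminus eval_add eval_uminus)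

lemma eval_one[simp]: "eval_mpoly 1 v = 1"
  by (metis eval_single mult_1 single_one vpow_zero)

lemma eval_superset: "finite A \<Longrightarrow> ks p \<subseteq> A \<Longrightarrow>
   eval_mpoly p v = (\<Sum>m\<in>A. lk p m * vpow v m)"
  by (simp add: eval_gev gev_superset)

lemma Pring_iff: "p \<in> Pring s \<longleftrightarrow> (\<forall>m\<in>ks p. ks m \<subseteq> {..<s})"
  by (simp add: Pring_def)

lemma Pring_zero[simp]: "0 \<in> Pring s" by (simp add: Pring_def)
lemma Pring_one[simp]: "1 \<in> Pring s" by (simp add: Pring_def)

lemma Pring_add[intro]: "p \<in> Pring s \<Longrightarrow> q \<in> Pring s \<Longrightarrow> p + q \<in> Pring s"
  using keys_add[of p q] by (auto simp: Pring_def)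

lemma Pring_uminus[intro]: "p \<in> Pring s \<Longrightarrow> - p \<in> Pring s"
  by (auto simp: Pring_def in_keys_iff)

lemma Pring_diff[intro]: "p \<in> Pring s \<Longrightarrow> q \<in> Pring s \<Longrightarrow> p - q \<in> Pring s"
  by (metis Pring_add Pring_uminus diff_conv_add_uminus)

lemma Pring_mult[intro]: "p \<in> Pring s \<Longrightarrow> q \<in> Pring s \<Longrightarrow> p * q \<in> Pring s"
  using keys_mult[of p q] by (fastforce simp: Pring_def keys_add_nat)

lemma Pring_sum[intro]: "(\<And>i. i \<in> A \<Longrightarrow> f i \<in> Pring s) \<Longrightarrow> sum f A \<in> Pring s"
  by (induction A rule: infinite_finite_induct) auto

lemma Pring_single[intro]: "ks m \<subseteq> {..<s} \<Longrightarrow> sng m c \<in> Pring s"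
  by (simp add: Pring_def)

lemma Sd_iff: "p \<in> Sd s d \<longleftrightarrow> p \<in> Pring s \<and> (\<forall>m\<in>ks p. mdeg m = d)"
  by (simp add: Sd_def)

lemma Sd_zero[simp]: "0 \<in> Sd s d" by (simp add: Sd_def)

lemma Sd_add[intro]: "p \<in> Sd s d \<Longrightarrow> q \<in> Sd s d \<Longrightarrow> p + q \<in> Sd s d"
  using keys_add[of p q] by (auto simp: Sd_def)

lemma Sd_uminus[intro]: "p \<in> Sd s d \<Longrightarrow> - p \<in> Sd s d"
  by (auto simp: Sd_def in_keys_iff)

lemma Sd_diff[intro]: "p \<in> Sd s d \<Longrightarrow> q \<in> Sd s d \<Longrightarrow> p - q \<in> Sd s d"
  by (metis Sd_add Sd_uminus diff_conv_add_uminus)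

lemma Sd_mult[intro]: "p \<in> Sd s a \<Longrightarrow> q \<in> Sd s b \<Longrightarrow> p * q \<in> Sd s (a + b)"
  using keys_mult[of p q] by (fastforce simp: Sd_def mdeg_add)

lemma Sd_sum[intro]: "(\<And>i. i \<in> A \<Longrightarrow> f i \<in> Sd s d) \<Longrightarrow> sum f A \<in> Sd s d"
  by (induction A rule: infinite_finite_induct) auto

lemma Sd_single[intro]: "ks m \<subseteq> {..<s} \<Longrightarrow> mdeg m = d \<Longrightarrow> sng m c \<in> Sd s d"
  by (simp add: Sd_def Pring_def)

lemma Sd_const[intro]: "sng 0 c \<in> Sd s 0"
  by (simp add: Sd_def Pring_def)

lemma Sd_Pring: "p \<in> Sd s d \<Longrightarrow> p \<in> Pring s" by (simp add: Sd_def)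

lemma eval_form_scale:
  assumes "p \<in> Sd s d"
  shows "eval_mpoly p (\<lambda>i. c * v i) = c ^ d * eval_mpoly p v"
proof -
  have "eval_mpoly p (\<lambda>i. c * v i) = (\<Sum>m\<in>ks p. lk p m * (c ^ mdeg m * vpow v m))"
    by (simp add: eval_mpoly_def vpow_def[symmetric] vpow_scale)
  also have "\<dots> = (\<Sum>m\<in>ks p. c ^ d * (lk p m * vpow v m))"
    using assms by (intro sum.cong) (auto simp: Sd_def)
  also have "\<dots> = c ^ d * eval_mpoly p v"
    by (simp add: eval_mpoly_def vpow_def sum_distrib_left)
  finally show ?thesis .
qed

definition ideal_S :: "nat \<Rightarrow> ('a::field) mpoly set \<Rightarrow> bool" where
  "ideal_S s J \<longleftrightarrow> 0 \<in> J \<and> (\<forall>a\<in>J. \<forall>b\<in>J. a + b \<in> J) \<and> (\<forall>a\<in>J. \<forall>r\<in>Pring s. r * a \<in> J)"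

lemma ideal_S_zero: "ideal_S s J \<Longrightarrow> 0 \<in> J" by (simp add: ideal_S_def)
lemma ideal_S_add: "ideal_S s J \<Longrightarrow> a \<in> J \<Longrightarrow> b \<in> J \<Longrightarrow> a + b \<in> J" by (simp add: ideal_S_def)
lemma ideal_S_mult: "ideal_S s J \<Longrightarrow> a \<in> J \<Longrightarrow> r \<in> Pring s \<Longrightarrow> r * a \<in> J" by (simp add: ideal_S_def)
lemma ideal_S_mult2: "ideal_S s J \<Longrightarrow> a \<in> J \<Longrightarrow> r \<in> Pring s \<Longrightarrow> a * r \<in> J"
  by (simp add: ideal_S_def mult.commute)
lemma ideal_S_uminus: "ideal_S s J \<Longrightarrow> a \<in> J \<Longrightarrow> - a \<in> J"
  using ideal_S_mult[of s J a "-1"] by (simp add: Pring_uminus)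
lemma ideal_S_diff: "ideal_S s J \<Longrightarrow> a \<in> J \<Longrightarrow> b \<in> J \<Longrightarrow> a - b \<in> J"
  by (metis diff_conv_add_uminus ideal_S_add ideal_S_uminus)
lemma ideal_S_sum: "ideal_S s J \<Longrightarrow> (\<And>i. i \<in> A \<Longrightarrow> f i \<in> J) \<Longrightarrow> sum f A \<in> J"
  by (induction A rule: infinite_finite_induct) (auto simp: ideal_S_zero ideal_S_add)

lemma gen_ideal_ideal: "ideal_S s (gen_ideal s G)"
  unfolding ideal_S_def
proof (intro conjI ballI)
  show "0 \<in> gen_ideal s G" unfolding gen_ideal_def
    by (rule CollectI, rule exI[of _ "{}"]) auto
next
  fix a b assume "a \<in> gen_ideal s G" "b \<in> gen_ideal s G"
  then obtain F1 h1 F2 h2 where F1: "finite F1" "F1 \<subseteq> G" "\<forall>g\<in>F1. h1 g \<in> Pring s" "a = (\<Sum>g\<in>F1. h1 g * g)"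
    and F2: "finite F2" "F2 \<subseteq> G" "\<forall>g\<in>F2. h2 g \<in> Pring s" "b = (\<Sum>g\<in>F2. h2 g * g)"
    unfolding gen_ideal_def by blast
  define h where "h g = (if g \<in> F1 then h1 g else 0) + (if g \<in> F2 then h2 g else 0)" for g
  have "(\<Sum>g\<in>F1 \<union> F2. h g * g) = (\<Sum>g\<in>F1 \<union> F2. (if g \<in> F1 then h1 g * g else 0)) + (\<Sum>g\<in>F1 \<union> F2. (if g \<in> F2 then h2 g * g else 0))"
    unfolding sum.distrib[symmetric] by (rule sum.cong) (auto simp: h_def distrib_right)
  also have "\<dots> = a + b"
    using F1 F2 by (simp add: sum.If_cases Int_absorb1 Int_absorb2)
  finally show "a + b \<in> gen_ideal s G" unfolding gen_ideal_def
    using F1 F2 by (intro CollectI exI[of _ "F1 \<union> F2"] exI[of _ h]) (auto simp: h_def)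
next
  fix a r :: "'a mpoly" assume "a \<in> gen_ideal s G" "r \<in> Pring s"
  then obtain F h where F: "finite F" "F \<subseteq> G" "\<forall>g\<in>F. h g \<in> Pring s" "a = (\<Sum>g\<in>F. h g * g)"
    unfolding gen_ideal_def by blast
  show "r * a \<in> gen_ideal s G" unfolding gen_ideal_def
    using F \<open>r \<in> Pring s\<close>
    by (intro CollectI exI[of _ F] exI[of _ "\<lambda>g. r * h g"]) (auto simp: sum_distrib_left mult.assoc)
qed

lemma gen_ideal_base: "g \<in> G \<Longrightarrow> g \<in> gen_ideal s G"
  unfolding gen_ideal_def by (intro CollectI exI[of _ "{g}"] exI[of _ "\<lambda>_. 1"]) auto

lemma gen_ideal_least: "G \<subseteq> J \<Longrightarrow> ideal_S s J \<Longrightarrow> gen_ideal s G \<subseteq> J"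
  unfolding gen_ideal_def
  by (auto intro!: ideal_S_sum ideal_S_mult)

lemma gen_ideal_mono: "G \<subseteq> H \<Longrightarrow> gen_ideal s G \<subseteq> gen_ideal s H"
  by (meson gen_ideal_base gen_ideal_ideal gen_ideal_least subset_iff)

lemma ideal_Pring: "G \<subseteq> Pring s \<Longrightarrow> gen_ideal s G \<subseteq> Pring s"
  by (rule gen_ideal_least) (auto simp: ideal_S_def)

lemma ideal_S_ker_eval: "ideal_S s {p. eval_mpoly p w = 0}"
  by (simp add: ideal_S_def)

lemma gen_ideal_eval:
  assumes "\<And>g. g \<in> G \<Longrightarrow> eval_mpoly g w = 0" "p \<in> gen_ideal s G"
  shows "eval_mpoly p w = 0"
  using gen_ideal_least[OF _ ideal_S_ker_eval, of G w s] assms by auto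

lemma kscale_mult: "kscale c p = sng 0 c * p"
  by (simp add: kscale_def mult_map_scale_conv_mult)

lemma vs_kscale: "vector_space (kscale :: 'a::field \<Rightarrow> 'a mpoly \<Rightarrow> 'a mpoly)"
  by unfold_locales (simp_all add: kscale_mult distrib_left distrib_right mult.assoc mult_single
        single_add)

lemma eval_kscale[simp]: "eval_mpoly (kscale c p) v = c * eval_mpoly p v"
  by (simp add: kscale_mult)

lemma Sd_kscale[intro]: "p \<in> Sd s d \<Longrightarrow> kscale c p \<in> Sd s d"
  using Sd_mult[OF Sd_const, of p s d c] by (simp add: kscale_mult)

lemma Pring_kscale[intro]: "p \<in> Pring s \<Longrightarrow> kscale c p \<in> Pring s"
  using Pring_mult[of "sng 0 c" s p] by (simp add: kscale_mult Pring_single)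


definition hc :: "nat \<Rightarrow> ('a::field) mpoly \<Rightarrow> 'a mpoly" where
  "hc k p = (\<Sum>m\<in>{m\<in>ks p. mdeg m = k}. sng m (lk p m))"

lemma lookup_hc: "lk (hc k p) m = (if mdeg m = k then lk p m else 0)"
  unfolding hc_def lookup_sum
  by (cases "m \<in> ks p") (auto simp: lookup_single when_def in_keys_iff sum.delta cong: sum.cong)

lemma keys_hc: "ks (hc k p) = {m\<in>ks p. mdeg m = k}"
  by (auto simp: in_keys_iff lookup_hc split: if_splits)

lemma hc_Sd: "p \<in> Pring s \<Longrightarrow> hc k p \<in> Sd s k"
  by (auto simp: Sd_def Pring_def keys_hc)

lemma hc_decomp: "p = (\<Sum>k\<in>mdeg ` ks p. hc k p)"
proof (rule poly_mapping_eqI)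
  fix m
  show "lk p m = lk (\<Sum>k\<in>mdeg ` ks p. hc k p) m"
    by (cases "m \<in> ks p") (auto simp: lookup_sum lookup_hc in_keys_iff sum.delta' cong: sum.cong)
qed

lemma eval_hc: "eval_mpoly (hc k p) v = (\<Sum>m\<in>{m\<in>ks p. mdeg m = k}. lk p m * vpow v m)"
  by (simp add: hc_def eval_sum)

lemma hc_form: "p \<in> Sd s k \<Longrightarrow> hc k p = p"
  by (rule poly_mapping_eqI) (auto simp: lookup_hc Sd_def in_keys_iff)

section \<open>the map to univariate polynomials\<close>

definition phi :: "(nat \<Rightarrow> 'a::field) \<Rightarrow> 'a mpoly \<Rightarrow> 'a poly" where
  "phi v p = gev (\<lambda>c. monom c 0) (\<lambda>m. monom (vpow v m) (mdeg m)) p"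

lemma phi_add[simp]: "phi v (p + q) = phi v p + phi v q"
  by (simp add: phi_def gev_add add_monom)

lemma phi_mult[simp]: "phi v (p * q) = phi v p * phi v q"
  unfolding phi_def by (rule gev_mult) (simp_all add: add_monom mult_monom vpow_add mdeg_add)

lemma phi_zero[simp]: "phi v 0 = 0" by (simp add: phi_def)

lemma phi_single[simp]: "phi v (sng m c) = monom (c * vpow v m) (mdeg m)"
  by (simp add: phi_def gev_single mult_monom)

lemma phi_one[simp]: "phi v 1 = 1"
  by (metis phi_single mdeg_zero mult_1 one_poly_eq_simps(1) single_one vpow_zero monom_0 pCons_one)

lemma phi_uminus[simp]: "phi v (- p) = - phi v p"
  by (metis add_eq_0_iff2 neg_eq_iff_add_eq_0 phi_add phi_zero)

lemma phi_diff[simp]: "phi v (p - q) = phi v p - phi v q"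
  by (metis diff_conv_add_uminus phi_add phi_uminus)

lemma coeff_phi: "coeff (phi v p) k = eval_mpoly (hc k p) v"
proof -
  have "phi v p = (\<Sum>m\<in>ks p. monom (lk p m * vpow v m) (mdeg m))"
    by (simp add: phi_def gev_def mult_monom)
  then have "coeff (phi v p) k = (\<Sum>m\<in>ks p. if mdeg m = k then lk p m * vpow v m else 0)"
    by (simp add: coeff_sum)
  also have "\<dots> = eval_mpoly (hc k p) v"
    by (simp add: eval_hc sum.inter_filter)
  finally show ?thesis .
qed

lemma phi_form: 
  assumes "p \<in> Sd s d" shows "phi v p = monom (eval_mpoly p v) d"
proof (rule poly_eqI)
  fix n
  show "coeff (phi v p) n = coeff (monom (eval_mpoly p v) d) n"
  proof (cases "n = d")
    case True then show ?thesis using assms by (simp add: coeff_phi hc_form)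
  next
    case False
    then have "{m\<in>ks p. mdeg m = n} = {}" using assms by (auto simp: Sd_def)
    then show ?thesis using False by (simp only: coeff_phi eval_hc) simp
  qed
qed

lemma phi_eq_0_iff: "phi v p = 0 \<longleftrightarrow> (\<forall>k. eval_mpoly (hc k p) v = 0)"
  by (simp add: poly_eq_iff coeff_phi)

lemma phi_hc: "phi v (hc k p) = monom (coeff (phi v p) k) k"
proof (rule poly_eqI)
  fix n
  show "coeff (phi v (hc k p)) n = coeff (monom (coeff (phi v p) k) k) n"
    by (auto simp: coeff_phi lookup_hc eval_hc keys_hc intro!: sum.neutral)
qed

definition rep :: "nat \<Rightarrow> (nat \<Rightarrow> 'a::field) set \<Rightarrow> nat \<Rightarrow> 'a" where
  "rep s P = (SOME v. (\<forall>i\<ge>s. v i = 0) \<and> v \<noteq> (\<lambda>_. 0) \<and> P = {(\<lambda>i. c * v i) | c. c \<noteq> 0})"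

lemma rep:
  assumes "P \<in> proj_space s"
  shows "\<forall>i\<ge>s. rep s P i = 0" "rep s P \<noteq> (\<lambda>_. 0)" "P = {(\<lambda>i. c * rep s P i) | c. c \<noteq> 0}"
proof -
  from assms obtain v where "(\<forall>i\<ge>s. v i = 0) \<and> v \<noteq> (\<lambda>_. 0) \<and> P = {(\<lambda>i. c * v i) | c. c \<noteq> 0}"
    unfolding proj_space_def by blast
  then have "(\<forall>i\<ge>s. rep s P i = 0) \<and> rep s P \<noteq> (\<lambda>_. 0) \<and> P = {(\<lambda>i. c * rep s P i) | c. c \<noteq> 0}"
    unfolding rep_def by (rule someI[where x=v])
  then show "\<forall>i\<ge>s. rep s P i = 0" "rep s P \<noteq> (\<lambda>_. 0)" "P = {(\<lambda>i. c * rep s P i) | c. c \<noteq> 0}"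
    by auto
qed

lemma rep_in: assumes "P \<in> proj_space s" shows "rep s P \<in> P"
proof -
  have "(\<lambda>i. 1 * rep s P i) \<in> {(\<lambda>i. c * rep s P i) | c. c \<noteq> 0}"
    by (rule CollectI, rule exI[of _ 1]) simp
  then show ?thesis using rep(3)[OF assms] by simp
qed

lemma rep_nz: assumes "P \<in> proj_space s" shows "\<exists>j<s. rep s P j \<noteq> 0"
proof -
  obtain j where "rep s P j \<noteq> 0" using rep(2)[OF assms] by (auto simp: fun_eq_iff)
  moreover then have "j < s" using rep(1)[OF assms] by (meson not_le)
  ultimately show ?thesis by blast
qed

lemma vanishes_form:
  assumes "P \<in> proj_space s" "f \<in> Sd s d"
  shows "vanishes_at f P \<longleftrightarrow> eval_mpoly f (rep s P) = 0"
proof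
  assume "vanishes_at f P" then show "eval_mpoly f (rep s P) = 0"
    using rep_in[OF assms(1)] by (simp add: vanishes_at_def)
next
  assume H: "eval_mpoly f (rep s P) = 0"
  show "vanishes_at f P"
    unfolding vanishes_at_def
  proof
    fix w assume "w \<in> P"
    then obtain c where "w = (\<lambda>i. c * rep s P i)" using rep(3)[OF assms(1)] by blast
    then show "eval_mpoly f w = 0" using eval_form_scale[OF assms(2)] H by simp
  qed
qed

definition var :: "nat \<Rightarrow> nat \<Rightarrow> ('a::field) mpoly" where
  "var i e = sng (sng i e) 1"

lemma eval_var[simp]: "eval_mpoly (var i e) v = v i ^ e"
  by (simp add: var_def vpow_def)

lemma var_Sd[intro]: "i < s \<Longrightarrow> var i e \<in> Sd s e"
  unfolding var_def by (rule Sd_single) auto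

lemma eval_prod: "eval_mpoly (prod f A) v = (\<Prod>i\<in>A. eval_mpoly (f i) v)"
  by (induction A rule: infinite_finite_induct) auto

lemma Sd_prod: "(\<And>i. i \<in> A \<Longrightarrow> f i \<in> Sd s 1) \<Longrightarrow> prod f A \<in> Sd s (card A)"
proof (induction A rule: infinite_finite_induct)
  case (infinite A) then show ?case by (simp add: Sd_def)
next
  case empty then show ?case by (simp add: Sd_def)
next
  case (insert x F)
  then show ?case using Sd_mult[of "f x" s 1 "prod f F" "card F"] by simp
qed

lemma separate:
  assumes "P \<in> proj_space s" "Q \<in> proj_space s" "P \<noteq> Q"
  shows "\<exists>L\<in>Sd s 1. eval_mpoly L (rep s P) = 0 \<and> eval_mpoly L (rep s Q) \<noteq> 0"
proof -
  let ?v = "rep s P" and ?w = "rep s Q"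
  have "\<exists>i j. ?v i * ?w j \<noteq> ?v j * ?w i"
  proof (rule ccontr)
    assume H: "\<not> ?thesis"
    obtain j where j: "j < s" "?v j \<noteq> 0" using rep_nz[OF assms(1)] by blast
    define c where "c = ?w j / ?v j"
    have w: "?w i = c * ?v i" for i
      using H j by (auto simp: c_def field_simps)
    have "c \<noteq> 0" using rep(2)[OF assms(2)] w by (auto simp: fun_eq_iff)
    have "Q = {(\<lambda>i. a * ?w i) | a. a \<noteq> 0}" by (rule rep(3)[OF assms(2)])
    also have "\<dots> = {(\<lambda>i. a * ?v i) | a. a \<noteq> 0}"
    proof safe
      fix a :: 'a assume "a \<noteq> 0" then show "\<exists>b. (\<lambda>i. a * ?w i) = (\<lambda>i. b * ?v i) \<and> b \<noteq> 0"
        using \<open>c \<noteq> 0\<close> by (intro exI[of _ "a * c"]) (auto simp: w)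
    next
      fix a :: 'a assume "a \<noteq> 0" then show "\<exists>b. (\<lambda>i. a * ?v i) = (\<lambda>i. b * ?w i) \<and> b \<noteq> 0"
        using \<open>c \<noteq> 0\<close> by (intro exI[of _ "a / c"]) (auto simp: w)
    qed
    also have "\<dots> = P" by (rule rep(3)[OF assms(1), symmetric])
    finally show False using assms(3) by simp
  qed
  then obtain i j where ij: "?v i * ?w j \<noteq> ?v j * ?w i" by blast
  have "i < s" using ij rep(1)[OF assms(1)] rep(1)[OF assms(2)] by (metis mult_zero_left mult_zero_right not_le)
  have "j < s" using ij rep(1)[OF assms(1)] rep(1)[OF assms(2)] by (metis mult_zero_left mult_zero_right not_le)
  define L :: "'a mpoly" where "L = kscale (?v j) (var i 1) - kscale (?v i) (var j 1)"
  have "L \<in> Sd s 1" using \<open>i<s\<close> \<open>j<s\<close> by (auto simp: L_def)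
  moreover have "eval_mpoly L ?v = 0" by (simp add: L_def mult.commute)
  moreover have "eval_mpoly L ?w \<noteq> 0" using ij by (simp add: L_def mult.commute)
  ultimately show ?thesis by blast
qed

lemma interpolate:
  assumes "X \<subseteq> proj_space s" "finite X" "P \<in> X" "card X - 1 \<le> e"
  shows "\<exists>f\<in>Sd s e. eval_mpoly f (rep s P) = 1 \<and> (\<forall>Q\<in>X - {P}. eval_mpoly f (rep s Q) = 0)"
proof -
  have "\<forall>Q\<in>X - {P}. \<exists>L\<in>Sd s 1. eval_mpoly L (rep s Q) = 0 \<and> eval_mpoly L (rep s P) \<noteq> 0"
    using assms separate by (metis DiffE insertI1 subsetD)
  then obtain L where L: "\<And>Q. Q \<in> X - {P} \<Longrightarrow> L Q \<in> Sd s 1 \<and> eval_mpoly (L Q) (rep s Q) = 0 \<and> eval_mpoly (L Q) (rep s P) \<noteq> 0"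
    by metis
  obtain j where j: "j < s" "rep s P j \<noteq> 0" using rep_nz assms by blast
  have cX: "card (X - {P}) = card X - 1" using assms by simp
  define f0 where "f0 = prod L (X - {P}) * var j (e - (card X - 1))"
  have f0: "f0 \<in> Sd s e"
    unfolding f0_def using Sd_mult[OF Sd_prod var_Sd[OF j(1)], of "X - {P}" L "e - (card X - 1)"] L cX assms(4)
    by auto
  have "eval_mpoly f0 (rep s P) \<noteq> 0"
    using L j assms(2) by (simp add: f0_def eval_prod prod_zero_iff)
  moreover have "eval_mpoly f0 (rep s Q) = 0" if "Q \<in> X - {P}" for Q
  proof -
    show ?thesis using that L assms(2) by (simp add: f0_def eval_prod prod_zero_iff) blast
  qed
  ultimately have A: "eval_mpoly f0 (rep s P) \<noteq> 0" "\<And>Q. Q \<in> X - {P} \<Longrightarrow> eval_mpoly f0 (rep s Q) = 0"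
    by blast+
  define g where "g = kscale (1 / eval_mpoly f0 (rep s P)) f0"
  have g1: "g \<in> Sd s e" unfolding g_def using f0 by (rule Sd_kscale)
  have g2: "eval_mpoly g (rep s P) = 1" unfolding g_def eval_kscale using A(1) by (simp)
  have g3: "\<forall>Q\<in>X - {P}. eval_mpoly g (rep s Q) = 0" unfolding g_def eval_kscale using A(2) by simp
  from g1 g2 g3 show ?thesis by blast

qed


section \<open>ideals of univariate polynomials\<close>

definition pideal :: "'a::field poly set \<Rightarrow> bool" where
  "pideal p \<longleftrightarrow> 0 \<in> p \<and> (\<forall>a\<in>p. \<forall>b\<in>p. a + b \<in> p) \<and> (\<forall>a\<in>p. \<forall>r. r * a \<in> p)"

lemma pideal_diff: "pideal p \<Longrightarrow> a \<in> p \<Longrightarrow> b \<in> p \<Longrightarrow> a - b \<in> p"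
  unfolding pideal_def
  by (metis diff_conv_add_uminus mult_minus1)

lemma pideal_min_dvd:
  assumes "pideal p" "\<pi> \<in> p" "\<pi> \<noteq> 0" "\<forall>y\<in>p - {0}. degree \<pi> \<le> degree y" "b \<in> p"
  shows "\<pi> dvd b"
proof -
  have "b mod \<pi> = b - (b div \<pi>) * \<pi>" by (simp add: minus_div_mult_eq_mod)
  also have "\<dots> \<in> p" using assms(1,2,5) by (intro pideal_diff) (auto simp: pideal_def)
  finally have "b mod \<pi> \<in> p" .
  then have "b mod \<pi> = 0" using assms(3,4) degree_mod_less[of \<pi> b] by force
  then show ?thesis by (simp add: mod_eq_0_iff_dvd)
qed

lemma pideal_min_exists:
  assumes "y0 \<in> p" "y0 \<noteq> (0::'a::field poly)"
  obtains \<pi> where "\<pi> \<in> p" "\<pi> \<noteq> 0" "\<forall>y\<in>p - {0}. degree \<pi> \<le> degree y"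
proof -
  define n where "n = (LEAST n. \<exists>y\<in>p - {0}. degree y = n)"
  have "\<exists>y\<in>p - {0}. degree y = n" unfolding n_def by (rule LeastI[of _ "degree y0"]) (use assms in auto)
  then obtain \<pi> where "\<pi> \<in> p - {0}" "degree \<pi> = n" by blast
  moreover have "\<forall>y\<in>p - {0}. n \<le> degree y" unfolding n_def by (auto intro: Least_le)
  ultimately show ?thesis using that by auto
qed

lemma poly_no_chain:
  fixes p1 p2 :: "'a::field poly set"
  assumes "pideal p1" "pideal p2" "p1 \<subset> p2" "p1 \<noteq> {0}" "1 \<notin> p2"
    and prime: "\<And>a b. a * b \<in> p1 \<Longrightarrow> a \<in> p1 \<or> b \<in> p1"
  shows False
proof -
  obtain y0 where "y0 \<in> p1" "y0 \<noteq> 0" using assms(1,4) unfolding pideal_def by blast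
  then obtain \<pi> where pi: "\<pi> \<in> p1" "\<pi> \<noteq> 0" "\<forall>y\<in>p1 - {0}. degree \<pi> \<le> degree y"
    using pideal_min_exists by blast
  have "\<pi> \<in> p2" using pi assms(3) by blast
  then obtain \<pi>' where pi': "\<pi>' \<in> p2" "\<pi>' \<noteq> 0" "\<forall>y\<in>p2 - {0}. degree \<pi>' \<le> degree y"
    using pideal_min_exists pi(2) by blast
  have "\<pi>' dvd \<pi>" using pideal_min_dvd[OF assms(2) pi'] \<open>\<pi> \<in> p2\<close> by blast
  then obtain c where c: "\<pi> = \<pi>' * c" by (auto elim: dvdE)
  show False
  proof (cases "\<pi>' \<in> p1")
    case True
    have "p2 \<subseteq> p1"
    proof
      fix b assume "b \<in> p2"
      then obtain e where "b = \<pi>' * e" using pideal_min_dvd[OF assms(2) pi'] by (auto elim: dvdE)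
      then show "b \<in> p1" using True assms(1) unfolding pideal_def by (metis mult.commute)
    qed
    then show False using assms(3) by blast
  next
    case False
    then have "c \<in> p1" using prime c pi(1) by blast
    then obtain d where "c = \<pi> * d" using pideal_min_dvd[OF assms(1) pi] by (auto elim: dvdE)
    then have "\<pi> * 1 = \<pi> * (\<pi>' * d)" using c by (simp add: mult_ac)
    then have "\<pi>' * d = 1" using pi(2) by (metis mult_left_cancel)
    then have "1 \<in> p2" using pi'(1) assms(2) unfolding pideal_def by (metis mult.commute)
    then show False using assms(5) by blast
  qed
qed


lemma gen_ideal_self: "ideal_S s J \<Longrightarrow> J \<subseteq> Pring s \<Longrightarrow> gen_ideal s J = J"
  using gen_ideal_least[of J J s] gen_ideal_base[of _ J s] by blast

lemma phi_kscale[simp]: "phi v (kscale c p) = smult c (phi v p)"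
  by (simp add: kscale_mult monom_0)

lemma vI_Pring: "vanishing_ideal s X \<subseteq> Pring s"
  unfolding vanishing_ideal_def by (rule ideal_Pring) (auto simp: is_form_def Sd_def)

lemma vI_form_iff:
  assumes "X \<subseteq> proj_space s" "f \<in> Sd s d"
  shows "f \<in> vanishing_ideal s X \<longleftrightarrow> (\<forall>P\<in>X. eval_mpoly f (rep s P) = 0)"
proof
  assume "f \<in> vanishing_ideal s X"
  show "\<forall>P\<in>X. eval_mpoly f (rep s P) = 0"
  proof
    fix P assume "P \<in> X"
    then have P: "P \<in> proj_space s" using assms by blast
    show "eval_mpoly f (rep s P) = 0"
      using \<open>f \<in> vanishing_ideal s X\<close> unfolding vanishing_ideal_def
      by (rule gen_ideal_eval[rotated]) (use \<open>P \<in> X\<close> rep_in[OF P] in \<open>auto simp: vanishes_at_def\<close>)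
  qed
next
  assume "\<forall>P\<in>X. eval_mpoly f (rep s P) = 0"
  then have "\<forall>P\<in>X. vanishes_at f P" using vanishes_form[OF _ assms(2)] assms(1) by blast
  then show "f \<in> vanishing_ideal s X" unfolding vanishing_ideal_def
    using assms(2) by (intro gen_ideal_base) (auto simp: is_form_def)
qed

definition Ker :: "nat \<Rightarrow> (nat \<Rightarrow> 'a::field) set \<Rightarrow> 'a mpoly set" where
  "Ker s P = {p \<in> Pring s. phi (rep s P) p = 0}"

lemma ideal_Ker: "ideal_S s (Ker s P)"
  by (auto simp: ideal_S_def Ker_def)

lemma vI_sub_Ker:
  assumes "X \<subseteq> proj_space s" "P \<in> X"
  shows "vanishing_ideal s X \<subseteq> Ker s P"
  unfolding vanishing_ideal_def
proof (rule gen_ideal_least[OF _ ideal_Ker])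
  show "{f. is_form s f \<and> (\<forall>P\<in>X. vanishes_at f P)} \<subseteq> Ker s P"
  proof
    fix f assume "f \<in> {f. is_form s f \<and> (\<forall>P\<in>X. vanishes_at f P)}"
    then obtain d where f: "f \<in> Sd s d" "vanishes_at f P" using assms by (auto simp: is_form_def)
    then have "eval_mpoly f (rep s P) = 0" using vanishes_form[OF _ f(1)] assms by blast
    then show "f \<in> Ker s P" using f phi_form[OF f(1)] by (simp add: Ker_def Sd_Pring)
  qed
qed

lemma vI_char:
  assumes "X \<subseteq> proj_space s"
  shows "p \<in> vanishing_ideal s X \<longleftrightarrow> p \<in> Pring s \<and> (\<forall>P\<in>X. phi (rep s P) p = 0)"
proof
  assume "p \<in> vanishing_ideal s X"
  then show "p \<in> Pring s \<and> (\<forall>P\<in>X. phi (rep s P) p = 0)"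
    using vI_Pring vI_sub_Ker[OF assms] unfolding Ker_def by blast
next
  assume H: "p \<in> Pring s \<and> (\<forall>P\<in>X. phi (rep s P) p = 0)"
  have "hc k p \<in> vanishing_ideal s X" for k
  proof -
    have "hc k p \<in> Sd s k" using H hc_Sd by blast
    moreover have "\<forall>P\<in>X. eval_mpoly (hc k p) (rep s P) = 0"
      using H by (simp flip: coeff_phi)
    ultimately show ?thesis using vI_form_iff[OF assms] by blast
  qed
  then have "(\<Sum>k\<in>mdeg ` ks p. hc k p) \<in> vanishing_ideal s X"
    unfolding vanishing_ideal_def by (intro ideal_S_sum[OF gen_ideal_ideal]) (simp add: vanishing_ideal_def)
  then show "p \<in> vanishing_ideal s X" using hc_decomp[of p] by simp
qed

lemma vI_hc:
  assumes "X \<subseteq> proj_space s" "p \<in> vanishing_ideal s X"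
  shows "hc k p \<in> vanishing_ideal s X"
  using assms hc_Sd[of p s k] Sd_Pring[of "hc k p" s k] by (auto simp: vI_char phi_hc)

lemma phi_eq_0_form:
  assumes "f \<in> Sd s d" shows "phi v f = 0 \<longleftrightarrow> eval_mpoly f v = 0"
  using assms by (simp add: phi_form)

lemma colon_nonvanishing:
  assumes "X \<subseteq> proj_space s" "f \<in> Sd s d" "\<forall>P\<in>X. eval_mpoly f (rep s P) \<noteq> 0"
  shows "colon_ideal s (vanishing_ideal s X) f = vanishing_ideal s X"
proof
  show "colon_ideal s (vanishing_ideal s X) f \<subseteq> vanishing_ideal s X"
  proof
    fix h assume "h \<in> colon_ideal s (vanishing_ideal s X) f"
    then have h: "h \<in> Pring s" "h * f \<in> vanishing_ideal s X" by (auto simp: colon_ideal_def)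
    have "\<forall>P\<in>X. phi (rep s P) h = 0"
    proof
      fix P assume "P \<in> X"
      then have "phi (rep s P) h * phi (rep s P) f = 0" using h(2) assms(1) by (auto simp: vI_char)
      moreover have "phi (rep s P) f \<noteq> 0" using assms(3) \<open>P\<in>X\<close> phi_eq_0_form[OF assms(2)] by blast
      ultimately show "phi (rep s P) h = 0" by simp
    qed
    then show "h \<in> vanishing_ideal s X" using h(1) vI_char[OF assms(1)] by blast
  qed
next
  show "vanishing_ideal s X \<subseteq> colon_ideal s (vanishing_ideal s X) f"
    using assms(2) vI_Pring[of s X] unfolding colon_ideal_def vanishing_ideal_def
    by (auto intro: ideal_S_mult2[OF gen_ideal_ideal] Sd_Pring)
qed

lemma colon_vanishing:
  assumes "X \<subseteq> proj_space s" "finite X" "f \<in> Sd s d" "P \<in> X" "eval_mpoly f (rep s P) = 0"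
  shows "colon_ideal s (vanishing_ideal s X) f \<noteq> vanishing_ideal s X"
proof -
  obtain h where h: "h \<in> Sd s (card X - 1)" "eval_mpoly h (rep s P) = 1"
      "\<forall>Q\<in>X - {P}. eval_mpoly h (rep s Q) = 0"
    using interpolate[OF assms(1,2,4) order.refl] by blast
  have "h \<notin> vanishing_ideal s X" using h(2) vI_form_iff[OF assms(1) h(1)] assms(4) by auto
  moreover have "h * f \<in> vanishing_ideal s X"
  proof -
    have "h * f \<in> Sd s (card X - 1 + d)" using h(1) assms(3) by blast
    moreover have "\<forall>Q\<in>X. eval_mpoly (h * f) (rep s Q) = 0" using h(3) assms(5) by auto
    ultimately show ?thesis using vI_form_iff[OF assms(1)] by blast
  qed
  moreover have "h \<in> Pring s" using h(1) by (rule Sd_Pring)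
  ultimately show ?thesis unfolding colon_ideal_def by blast
qed


section \<open>Krull dimension\<close>

lemma mdeg_eq_0: assumes "mdeg m = 0" shows "m = 0"
proof -
  have "\<forall>i\<in>ks m. lk m i = 0" using assms by (simp add: mdeg_def)
  then have "ks m = {}" using in_keys_iff by blast
  then show ?thesis by simp
qed

lemma vpow_zero_vec: "vpow (\<lambda>_. 0::'a::field) m = (if m = 0 then 1 else 0)"
proof (cases "m = 0")
  case False
  then have "ks m \<noteq> {}" by simp
  then obtain i where "i \<in> ks m" by blast
  then have "(0::'a) ^ lk m i = 0" by (simp add: in_keys_iff)
  then have "vpow (\<lambda>_. 0::'a) m = 0" unfolding vpow_def
    using \<open>i \<in> ks m\<close> by (intro prod_zero) auto
  then show ?thesis using False by simp
qed simp

lemma eval_zero_vec: "eval_mpoly p (\<lambda>_. 0::'a::field) = lk p 0"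
proof -
  have "eval_mpoly p (\<lambda>_. 0::'a) = (\<Sum>x\<in>ks p. if x = 0 then lk p x else 0)"
    unfolding eval_mpoly_def vpow_def[symmetric] vpow_zero_vec by (intro sum.cong) auto
  also have "\<dots> = lk p 0" by (simp add: sum.delta' in_keys_iff)
  finally show ?thesis .
qed

lemma coeff_phi_0: "coeff (phi v p) 0 = lk (p::'a::field mpoly) 0"
proof -
  have "{m\<in>ks p. mdeg m = 0} = (if 0 \<in> ks p then {0} else {})" using mdeg_eq_0 by auto
  then show ?thesis by (auto simp: coeff_phi eval_hc in_keys_iff)
qed

lemma prime_ker_hom:
  fixes F :: "'a::field mpoly \<Rightarrow> 'b::idom"
  assumes "\<And>p q. F (p + q) = F p + F q" "\<And>p q. F (p * q) = F p * F q" "F 0 = 0" "F 1 \<noteq> 0"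
  shows "prime_ideal_S s {p \<in> Pring s. F p = 0}"
proof -
  have I: "ideal_S s {p \<in> Pring s. F p = 0}" using assms by (auto simp: ideal_S_def)
  show ?thesis unfolding prime_ideal_S_def
  proof (intro conjI)
    show "gen_ideal s {p \<in> Pring s. F p = 0} = {p \<in> Pring s. F p = 0}" by (rule gen_ideal_self[OF I]) auto
    show "{p \<in> Pring s. F p = 0} \<noteq> Pring s" using assms(4) Pring_one by blast
  qed (use assms in auto)
qed

lemma prime_Ker: "prime_ideal_S s (Ker s P)"
  unfolding Ker_def by (rule prime_ker_hom) auto

definition M0 :: "nat \<Rightarrow> ('a::field) mpoly set" where
  "M0 s = {p \<in> Pring s. eval_mpoly p (\<lambda>_. 0) = 0}"

lemma prime_M0: "prime_ideal_S s (M0 s)"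
  unfolding M0_def by (rule prime_ker_hom) auto

lemma Ker_psubset_M0:
  assumes "P \<in> proj_space s"
  shows "Ker s P \<subset> M0 s"
proof
  show "Ker s P \<subseteq> M0 s" unfolding Ker_def M0_def
  proof (intro subsetI CollectI conjI)
    fix p assume "p \<in> {p \<in> Pring s. phi (rep s P) p = 0}"
    then have "p \<in> Pring s" "phi (rep s P) p = 0" by auto
    then show "p \<in> Pring s" "eval_mpoly p (\<lambda>_. 0) = 0"
      using coeff_phi_0[of "rep s P" p] by (auto simp: eval_zero_vec)
  qed
  obtain j where j: "j < s" "rep s P j \<noteq> 0" using rep_nz[OF assms] by blast
  have "var j 1 \<in> Pring s" using j by (intro Sd_Pring[OF var_Sd])
  have "sng j (1::nat) \<noteq> 0" by (metis lookup_single_eq lookup_zero one_neq_zero)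
  then have "var j 1 \<in> M0 s" using \<open>var j 1 \<in> Pring s\<close>
    by (simp add: M0_def eval_zero_vec var_def lookup_single when_def)
  moreover have "var j 1 \<notin> Ker s P" using j phi_form[OF var_Sd[OF j(1)], of "rep s P" 1]
    by (simp add: Ker_def)
  ultimately show "Ker s P \<noteq> M0 s" by blast
qed

lemma phi_sum: "phi v (sum f A) = (\<Sum>i\<in>A. phi v (f i))"
  by (induction A rule: infinite_finite_induct) auto

lemma phi_surj:
  assumes "j < s" "v j \<noteq> 0"
  shows "\<exists>p\<in>Pring s. phi v p = u"
proof -
  define p where "p = (\<Sum>i\<le>degree u. kscale (coeff u i / v j ^ i) (var j i))"
  have "p \<in> Pring s" unfolding p_def
    by (intro Pring_sum Pring_kscale Sd_Pring[OF var_Sd[OF assms(1)]])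
  moreover have "phi v p = (\<Sum>i\<le>degree u. monom (coeff u i) i)"
    unfolding p_def phi_sum using assms
    by (intro sum.cong) (simp_all add: phi_form[OF var_Sd[OF assms(1)]] smult_monom)
  ultimately show ?thesis by (auto simp: poly_as_sum_of_monoms)
qed

lemma Pring_prod: "(\<And>i. i \<in> A \<Longrightarrow> f i \<in> Pring s) \<Longrightarrow> prod f A \<in> Pring s"
  by (induction A rule: infinite_finite_induct) auto

lemma prime_contains_Ker:
  assumes "X \<subseteq> proj_space s" "finite X" "prime_ideal_S s Q" "vanishing_ideal s X \<subseteq> Q"
  shows "\<exists>P\<in>X. Ker s P \<subseteq> Q"
proof (rule ccontr)
  assume "\<not> ?thesis"
  then have "\<forall>P\<in>X. \<exists>g. g \<in> Ker s P \<and> g \<notin> Q" by blast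
  then obtain g where g: "\<And>P. P \<in> X \<Longrightarrow> g P \<in> Ker s P \<and> g P \<notin> Q" by metis
  have QP: "Q \<subseteq> Pring s" "Q \<noteq> Pring s" and pr: "\<forall>a\<in>Pring s. \<forall>b\<in>Pring s. a * b \<in> Q \<longrightarrow> a \<in> Q \<or> b \<in> Q"
    using assms(3) by (auto simp: prime_ideal_S_def)
  have gP: "g P \<in> Pring s" if "P \<in> X" for P using g[OF that] by (simp add: Ker_def)
  have "prod g X \<in> vanishing_ideal s X"
    unfolding vI_char[OF assms(1)]
  proof
    show "prod g X \<in> Pring s" using gP by (auto intro: Pring_prod)
    show "\<forall>P\<in>X. phi (rep s P) (prod g X) = 0"
    proof
      fix P assume "P \<in> X"
      have "phi (rep s P) (prod g X) = (\<Prod>Q\<in>X. phi (rep s P) (g Q))"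
        by (induction X rule: infinite_finite_induct) auto
      also have "\<dots> = 0" using \<open>P \<in> X\<close> g[OF \<open>P \<in> X\<close>] assms(2) by (auto simp: Ker_def)
      finally show "phi (rep s P) (prod g X) = 0" .
    qed
  qed
  then have "prod g X \<in> Q" using assms(4) by blast
  moreover have "\<forall>A\<subseteq>X. prod g A \<notin> Q"
  proof (intro allI impI)
    fix A assume "A \<subseteq> X"
    then have "finite A" using assms(2) finite_subset by blast
    then show "prod g A \<notin> Q" using \<open>A \<subseteq> X\<close>
    proof (induction A rule: finite_induct)
      case empty
      have "1 \<notin> Q"
      proof
        assume "1 \<in> Q"
        have "ideal_S s Q" using assms(3) gen_ideal_ideal[of s Q] unfolding prime_ideal_S_def by simp
        then have "Pring s \<subseteq> Q" using ideal_S_mult[OF _ \<open>1 \<in> Q\<close>] by fastforce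
        then show False using QP by blast
      qed
      then show ?case by simp
    next
      case (insert x F)
      have x: "x \<in> X" "F \<subseteq> X" using insert.prems by auto
      have a: "g x \<notin> Q" using g[OF x(1)] by blast
      have b: "prod g F \<notin> Q" using insert.IH[OF x(2)] .
      have c: "g x \<in> Pring s" using gP[OF x(1)] .
      have d: "prod g F \<in> Pring s" using gP x(2) by (intro Pring_prod) blast
      have "prod g (insert x F) = g x * prod g F" using insert.hyps by simp
      then show ?case using pr c d a b by metis
    qed
  qed
  ultimately show False by blast
qed


lemma prime_ideal_S_ideal: "prime_ideal_S s Q \<Longrightarrow> ideal_S s Q"
  using gen_ideal_ideal[of s Q] unfolding prime_ideal_S_def by simp

lemma prime_one: "prime_ideal_S s Q \<Longrightarrow> 1 \<notin> Q"
proof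
  assume Q: "prime_ideal_S s Q" "1 \<in> Q"
  then have "Pring s \<subseteq> Q" using ideal_S_mult[OF prime_ideal_S_ideal[OF Q(1)] Q(2)] by fastforce
  then show False using Q(1) unfolding prime_ideal_S_def by blast
qed

context
  fixes s :: nat and P :: "(nat \<Rightarrow> 'a::field) set"
  assumes P: "P \<in> proj_space s"
begin

lemma img_mem:
  assumes Q: "prime_ideal_S s Q" "Ker s P \<subseteq> Q" and x: "x \<in> Pring s"
  shows "phi (rep s P) x \<in> phi (rep s P) ` Q \<longleftrightarrow> x \<in> Q"
proof
  assume "phi (rep s P) x \<in> phi (rep s P) ` Q"
  then obtain q where q: "q \<in> Q" "phi (rep s P) x = phi (rep s P) q" by blast
  have QP: "Q \<subseteq> Pring s" using Q(1) by (simp add: prime_ideal_S_def)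
  have "x - q \<in> Ker s P" using q x QP by (auto simp: Ker_def)
  then have "x - q \<in> Q" using Q(2) by blast
  then have "(x - q) + q \<in> Q" using ideal_S_add[OF prime_ideal_S_ideal[OF Q(1)]] q(1) by blast
  then show "x \<in> Q" by simp
qed blast

lemma img_pideal:
  assumes Q: "prime_ideal_S s Q"
  shows "pideal (phi (rep s P) ` Q)"
proof -
  have I: "ideal_S s Q" and QP: "Q \<subseteq> Pring s" using Q prime_ideal_S_ideal by (auto simp: prime_ideal_S_def)
  obtain j where j: "j < s" "rep s P j \<noteq> 0" using rep_nz[OF P] by blast
  show ?thesis unfolding pideal_def
  proof (intro conjI ballI allI)
    show "0 \<in> phi (rep s P) ` Q" using ideal_S_zero[OF I] by (metis image_eqI phi_zero)
  next
    fix a b assume "a \<in> phi (rep s P) ` Q" "b \<in> phi (rep s P) ` Q"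
    then obtain a' b' where "a' \<in> Q" "b' \<in> Q" "a = phi (rep s P) a'" "b = phi (rep s P) b'" by blast
    then show "a + b \<in> phi (rep s P) ` Q" using ideal_S_add[OF I] by (metis image_eqI phi_add)
  next
    fix a r assume "a \<in> phi (rep s P) ` Q"
    then obtain a' where a': "a' \<in> Q" "a = phi (rep s P) a'" by blast
    obtain r' where r': "r' \<in> Pring s" "phi (rep s P) r' = r" using phi_surj[of j s "rep s P", OF j] by blast
    have "r' * a' \<in> Q" using ideal_S_mult[OF I a'(1) r'(1)] .
    then show "r * a \<in> phi (rep s P) ` Q" using a' r' by (metis image_eqI phi_mult)
  qed
qed

lemma img_prime:
  assumes Q: "prime_ideal_S s Q" "Ker s P \<subseteq> Q" and ab: "a * b \<in> phi (rep s P) ` Q"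
  shows "a \<in> phi (rep s P) ` Q \<or> b \<in> phi (rep s P) ` Q"
proof -
  obtain j where j: "j < s" "rep s P j \<noteq> 0" using rep_nz[OF P] by blast
  obtain a' where a': "a' \<in> Pring s" "phi (rep s P) a' = a" using phi_surj[of j s "rep s P", OF j] by blast
  obtain b' where b': "b' \<in> Pring s" "phi (rep s P) b' = b" using phi_surj[of j s "rep s P", OF j] by blast
  have "a' * b' \<in> Q" using img_mem[OF Q, of "a' * b'"] a' b' ab by auto
  then have "a' \<in> Q \<or> b' \<in> Q" using Q(1) a'(1) b'(1) unfolding prime_ideal_S_def by blast
  then show ?thesis using a' b' by blast
qed

lemma no_chain3:
  assumes Q0: "prime_ideal_S s Q0" "Ker s P \<subseteq> Q0"
    and Q1: "prime_ideal_S s Q1" and Q2: "prime_ideal_S s Q2"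
    and "Q0 \<subset> Q1" "Q1 \<subset> Q2"
  shows False
proof -
  let ?f = "phi (rep s P)"
  have K1: "Ker s P \<subseteq> Q1" and K2: "Ker s P \<subseteq> Q2" using assms by auto
  have P1: "Q1 \<subseteq> Pring s" "Q2 \<subseteq> Pring s" using Q1 Q2 by (auto simp: prime_ideal_S_def)
  have sub: "?f ` Q1 \<subset> ?f ` Q2"
  proof
    show "?f ` Q1 \<subseteq> ?f ` Q2" using assms by blast
    obtain x where "x \<in> Q2" "x \<notin> Q1" using assms(6) by blast
    then have "?f x \<in> ?f ` Q2" "?f x \<notin> ?f ` Q1" using img_mem[OF Q1 K1, of x] P1 by auto
    then show "?f ` Q1 \<noteq> ?f ` Q2" by blast
  qed
  have nz: "?f ` Q1 \<noteq> {0}"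
  proof
    assume H: "?f ` Q1 = {0}"
    obtain x where "x \<in> Q1" "x \<notin> Q0" using assms(5) by blast
    moreover then have "?f x = 0" using H by blast
    ultimately show False using img_mem[OF Q0, of x] P1 by (metis image_eqI phi_zero ideal_S_zero prime_ideal_S_ideal Q0(1) subsetD)
  qed
  have one: "1 \<notin> ?f ` Q2" using img_mem[OF Q2 K2, of 1] prime_one[OF Q2] by simp
  show False
    using poly_no_chain[OF img_pideal[OF Q1] img_pideal[OF Q2] sub nz one] img_prime[OF Q1 K1] by blast
qed

end

lemma krull_one:
  assumes X: "X \<subseteq> proj_space s" "finite X" and J: "vanishing_ideal s X \<subseteq> J" "P \<in> X" "J \<subseteq> Ker s P"
  shows "krull_dim_quot s J = 1"
proof -
  let ?S = "{n. \<exists>Pc :: nat \<Rightarrow> 'a mpoly set.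
       (\<forall>i\<le>n. prime_ideal_S s (Pc i) \<and> J \<subseteq> Pc i) \<and> (\<forall>i<n. Pc i \<subset> Pc (Suc i))}"
  have PP: "P \<in> proj_space s" using X J by blast
  have "?S = {0, 1}"
  proof (intro equalityI subsetI)
    fix n assume "n \<in> ?S"
    then obtain Pc :: "nat \<Rightarrow> 'a mpoly set" where Pc: "\<forall>i\<le>n. prime_ideal_S s (Pc i) \<and> J \<subseteq> Pc i"
      "\<forall>i<n. Pc i \<subset> Pc (Suc i)" by blast
    show "n \<in> {0, 1}"
    proof (rule ccontr)
      assume "n \<notin> {0, 1}"
      then have n: "2 \<le> n" by auto
      have "prime_ideal_S s (Pc 0) \<and> J \<subseteq> Pc 0" using Pc(1) by blast
      then have p0: "prime_ideal_S s (Pc 0)" "vanishing_ideal s X \<subseteq> Pc 0" using J(1) by auto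
      obtain R where R: "R \<in> X" "Ker s R \<subseteq> Pc 0" using prime_contains_Ker[OF X p0] by blast
      have RP: "R \<in> proj_space s" using R X by blast
      show False
        using no_chain3[OF RP p0(1) R(2), of "Pc 1" "Pc 2"] Pc n by (auto simp: numeral_2_eq_2)
    qed
  next
    fix n assume "n \<in> {0::nat, 1}"
    moreover have "0 \<in> ?S" using prime_Ker[of s P] J by (intro CollectI exI[of _ "\<lambda>_. Ker s P"]) auto
    moreover have "1 \<in> ?S"
    proof -
      define C where "C i = (if i = 0 then Ker s P else M0 s)" for i :: nat
      have a: "\<forall>i\<le>1. prime_ideal_S s (C i) \<and> J \<subseteq> C i"
        using prime_Ker prime_M0 J Ker_psubset_M0[OF PP] by (auto simp: C_def)
      have b: "\<forall>i<1. C i \<subset> C (Suc i)" using Ker_psubset_M0[OF PP] by (auto simp: C_def)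
      show ?thesis using a b by blast
    qed
    ultimately show "n \<in> ?S" by blast
  qed
  then show ?thesis unfolding krull_dim_quot_def by (simp add: Sup_nat_def)
qed


context vector_space begin

lemma dim_split:
  fixes lam :: "'i \<Rightarrow> 'b \<Rightarrow> 'a" and e :: "'i \<Rightarrow> 'b"
  assumes V: "subspace V" and F: "finite F" "V \<subseteq> span F" and Y: "finite Y"
    and eV: "\<And>i. i \<in> Y \<Longrightarrow> e i \<in> V"
    and delta: "\<And>i j. i \<in> Y \<Longrightarrow> j \<in> Y \<Longrightarrow> lam i (e j) = (if i = j then 1 else 0)"
    and ladd: "\<And>i x y. lam i (x + y) = lam i x + lam i y"
    and lscale: "\<And>i c x. lam i (c *s x) = c * lam i x"
  shows "dim V = dim {x\<in>V. \<forall>i\<in>Y. lam i x = 0} + card Y"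
proof -
  define W where "W = {x\<in>V. \<forall>i\<in>Y. lam i x = 0}"
  have l0: "lam i 0 = 0" for i using lscale[of i 0 0] by simp
  have lsum: "lam i (sum f A) = (\<Sum>a\<in>A. lam i (f a))" for i f A
    by (induction A rule: infinite_finite_induct) (auto simp: l0 ladd)
  have lminus: "lam i (x - y) = lam i x - lam i y" for i x y
    using ladd[of i "x - y" y] by simp
  have Wsub: "subspace W" unfolding W_def subspace_def
    using V by (auto simp: l0 ladd lscale subspace_0 subspace_add subspace_scale)
  obtain B where B: "B \<subseteq> W" "independent B" "W \<subseteq> span B" "card B = dim W"
    using basis_exists by blast
  have "B \<subseteq> span F" using B(1) F(2) unfolding W_def by blast
  then have finB: "finite B" using independent_span_bound[OF F(1) B(2)] by blast
  have inj: "inj_on e Y"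
  proof (rule inj_onI)
    fix i j assume "i \<in> Y" "j \<in> Y" "e i = e j"
    then show "i = j" using delta[of i i] delta[of i j] by (auto split: if_splits)
  qed
  let ?E = "e ` Y"
  have lamE: "lam i v = (if v = e i then 1 else 0)" if "i \<in> Y" "v \<in> ?E" for i v
    using that delta inj by (auto dest: inj_onD)
  have disj: "B \<inter> ?E = {}"
  proof (rule ccontr)
    assume "B \<inter> ?E \<noteq> {}"
    then obtain i where "i \<in> Y" "e i \<in> B" by blast
    then have "lam i (e i) = 0" using B(1) unfolding W_def by blast
    then show False using delta[OF \<open>i\<in>Y\<close> \<open>i\<in>Y\<close>] by simp
  qed
  have BW: "lam i b = 0" if "b \<in> B" "i \<in> Y" for b i using that B(1) unfolding W_def by blast
  have indep: "independent (B \<union> ?E)"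
    unfolding independent_explicit_finite_subsets
  proof (intro allI impI ballI)
    fix S u v assume S: "S \<subseteq> B \<union> ?E" "finite S" and sum0: "(\<Sum>v\<in>S. u v *s v) = 0" and "v \<in> S"
    have uE: "u w = 0" if wSE: "w \<in> S \<inter> ?E" for w
    proof -
      obtain i where i: "i \<in> Y" "w = e i" using wSE by blast
      have "0 = lam i (\<Sum>v\<in>S. u v *s v)" using sum0 l0 by simp
      also have "\<dots> = (\<Sum>v\<in>S. u v * lam i v)" by (simp add: lsum lscale)
      also have "\<dots> = (\<Sum>v\<in>S. if v = w then u v else 0)"
      proof (rule sum.cong)
        fix v assume "v \<in> S"
        then show "u v * lam i v = (if v = w then u v else 0)"
          using S(1) BW[of v i] lamE[of i v] i by auto
      qed simp
      also have "\<dots> = u w" using wSE S(2) by simp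
      finally show ?thesis by simp
    qed
    have "(\<Sum>v\<in>S \<inter> B. u v *s v) = (\<Sum>v\<in>S. u v *s v)"
    proof (rule sum.mono_neutral_left)
      show "\<forall>i\<in>S - S \<inter> B. u i *s i = 0" using uE S(1) by auto
    qed (use S in auto)
    then have "(\<Sum>v\<in>S \<inter> B. u v *s v) = 0" using sum0 by simp
    then have uB: "u w = 0" if "w \<in> S \<inter> B" for w
      using B(2) S(2) that unfolding independent_explicit_finite_subsets
      by (metis inf_le2 finite_Int)
    show "u v = 0" using uE uB S(1) \<open>v \<in> S\<close> by blast
  qed
  have span: "V \<subseteq> span (B \<union> ?E)"
  proof
    fix x assume x: "x \<in> V"
    define y where "y = (\<Sum>i\<in>Y. lam i x *s e i)"
    have yV: "y \<in> V" unfolding y_def using V eV by (auto intro!: subspace_sum subspace_scale)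
    have "x - y \<in> W" unfolding W_def
    proof (intro CollectI conjI ballI)
      show "x - y \<in> V" using subspace_diff[OF V x yV] .
      fix j assume "j \<in> Y"
      have "lam j y = (\<Sum>i\<in>Y. lam i x * (if j = i then 1 else 0))"
        unfolding y_def lsum lscale using delta \<open>j\<in>Y\<close> by (intro sum.cong) auto
      also have "\<dots> = lam j x" using \<open>j\<in>Y\<close> Y by (simp add: if_distrib cong: if_cong)
      finally show "lam j (x - y) = 0" by (simp add: lminus)
    qed
    then have "x - y \<in> span (B \<union> ?E)" using B(3) span_mono[of B "B \<union> ?E"] by blast
    moreover have "y \<in> span (B \<union> ?E)" unfolding y_def
      by (intro span_sum span_scale span_base) auto
    ultimately have "(x - y) + y \<in> span (B \<union> ?E)" by (rule span_add)
    then show "x \<in> span (B \<union> ?E)" by simp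
  qed
  have sub: "B \<union> ?E \<subseteq> V" using B(1) eV unfolding W_def by blast
  have "card (B \<union> ?E) = card B + card Y"
    using card_Un_disjoint[OF finB _ disj] Y card_image[OF inj] by simp
  then have "dim V = card B + card Y" using dim_unique[OF sub span indep] by simp
  then show ?thesis using B(4) unfolding W_def by simp
qed

end


definition Mon :: "nat \<Rightarrow> nat \<Rightarrow> (nat \<Rightarrow>\<^sub>0 nat) set" where
  "Mon s d = {m. ks m \<subseteq> {..<s} \<and> mdeg m = d}"

lemma lookup_le_mdeg: "lk m i \<le> mdeg m"
proof (cases "i \<in> ks m")
  case True
  then show ?thesis unfolding mdeg_def by (intro member_le_sum) auto
qed (simp add: in_keys_iff)

lemma finite_Mon: "finite (Mon s d)"
proof -
  define r where "r = (\<lambda>m::nat\<Rightarrow>\<^sub>0nat. (\<lambda>i. if i \<in> {..<s} then lk m i else undefined))"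
  have "inj_on r (Mon s d)"
  proof (rule inj_onI)
    fix a b assume ab: "a \<in> Mon s d" "b \<in> Mon s d" "r a = r b"
    show "a = b"
    proof (rule poly_mapping_eqI)
      fix i show "lk a i = lk b i"
      proof (cases "i < s")
        case True
        have "r a i = r b i" using ab(3) by simp
        then show ?thesis using True by (simp add: r_def)
      next
        case False then have "i \<notin> ks a" "i \<notin> ks b" using ab by (auto simp: Mon_def)
        then show ?thesis by (simp add: in_keys_iff)
      qed
    qed
  qed
  moreover have "r ` Mon s d \<subseteq> PiE {..<s} (\<lambda>_. {..d})"
    using lookup_le_mdeg by (auto simp: Mon_def r_def PiE_iff extensional_def split: if_splits)
  ultimately show ?thesis by (metis finite_PiE finite_atMost finite_lessThan finite_imageD finite_subset)
qed

lemma finite_polys_keys: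
  assumes "finite A"
  shows "finite {p :: ('m \<Rightarrow>\<^sub>0 'a::{finite,zero}). ks p \<subseteq> A}"
proof -
  define r where "r = (\<lambda>p::'m \<Rightarrow>\<^sub>0 'a. (\<lambda>i. if i \<in> A then Poly_Mapping.lookup p i else undefined))"
  have "inj_on r {p. ks p \<subseteq> A}"
  proof (rule inj_onI)
    fix a b assume ab: "a \<in> {p. ks p \<subseteq> A}" "b \<in> {p. ks p \<subseteq> A}" "r a = r b"
    show "a = b"
    proof (rule poly_mapping_eqI)
      fix i show "Poly_Mapping.lookup a i = Poly_Mapping.lookup b i"
      proof (cases "i \<in> A")
        case True
        have "r a i = r b i" using ab(3) by simp
        then show ?thesis using True by (simp add: r_def)
      next
        case False then have "i \<notin> ks a" "i \<notin> ks b" using ab by auto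
        then show ?thesis by (simp add: in_keys_iff)
      qed
    qed
  qed
  moreover have "r ` {p. ks p \<subseteq> A} \<subseteq> PiE A (\<lambda>_. UNIV)" by (auto simp: r_def PiE_iff extensional_def)
  ultimately show ?thesis using assms by (metis finite_PiE finite_UNIV finite_imageD finite_subset)
qed

section \<open>Hilbert function\<close>

lemma kscale_single: "kscale c (sng m 1) = sng m c"
  by (simp add: kscale_mult mult_single)

lemma mod_kscale: "module (kscale :: 'a::field \<Rightarrow> 'a mpoly \<Rightarrow> 'a mpoly)"
  using vs_kscale by (simp add: module_iff_vector_space)

lemma Sd_span: "Sd s n \<subseteq> module.span kscale ((\<lambda>m. sng m (1::'a::field)) ` Mon s n)"
proof
  fix g :: "'a::field mpoly" assume g: "g \<in> Sd s n"
  have "g = (\<Sum>m\<in>ks g. kscale (lk g m) (sng m 1))"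
    by (subst mpoly_sum_singles) (simp add: kscale_single)
  also have "\<dots> \<in> module.span kscale ((\<lambda>m. sng m 1) ` Mon s n)"
    using g by (intro module.span_sum[OF mod_kscale] module.span_scale[OF mod_kscale]
        module.span_base[OF mod_kscale]) (auto simp: Sd_def Pring_def Mon_def)
  finally show "g \<in> module.span kscale ((\<lambda>m. sng m 1) ` Mon s n)" .
qed

lemma Sd_subspace: "module.subspace kscale (Sd s n :: 'a::field mpoly set)"
  by (auto simp: module.subspace_def[OF mod_kscale])


lemma hilbert_eq:
  fixes X :: "(nat \<Rightarrow> 'a::field) set set" and J :: "'a mpoly set"
  assumes X: "X \<subseteq> proj_space s" "finite X" and Y: "Y \<subseteq> X" and n: "card X - 1 \<le> n"
    and J: "J \<inter> Sd s n = {g \<in> Sd s n. \<forall>P\<in>Y. eval_mpoly g (rep s P) = 0}"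
  shows "hilbert_fun s J n = card Y"
proof -
  have "\<forall>P\<in>Y. \<exists>f. f \<in> Sd s n \<and> eval_mpoly f (rep s P) = 1 \<and> (\<forall>Q\<in>X - {P}. eval_mpoly f (rep s Q) = 0)"
    using interpolate[OF X _ n] Y by blast
  then obtain e where e: "\<And>P. P \<in> Y \<Longrightarrow> e P \<in> Sd s n \<and> eval_mpoly (e P) (rep s P) = 1 \<and>
      (\<forall>Q\<in>X - {P}. eval_mpoly (e P) (rep s Q) = 0)" by metis
  have finY: "finite Y" using X(2) Y finite_subset by blast
  have "vector_space.dim kscale (Sd s n :: 'a mpoly set) =
      vector_space.dim kscale {x \<in> Sd s n. \<forall>P\<in>Y. eval_mpoly x (rep s P) = 0} + card Y"
  proof (rule vector_space.dim_split[OF vs_kscale Sd_subspace finite_imageI[OF finite_Mon] Sd_span finY])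
    show "\<And>P. P \<in> Y \<Longrightarrow> e P \<in> Sd s n" using e by blast
    show "eval_mpoly (e Q) (rep s P) = (if P = Q then 1 else 0)" if "P \<in> Y" "Q \<in> Y" for P Q
      using e[OF that(2)] that Y by auto
  qed auto
  then show ?thesis unfolding hilbert_fun_def J by simp
qed

lemma vI_slice:
  assumes "X \<subseteq> proj_space s"
  shows "vanishing_ideal s X \<inter> Sd s n = {g \<in> Sd s n. \<forall>P\<in>X. eval_mpoly g (rep s P) = 0}"
  using vI_form_iff[OF assms] by blast

lemma gen_ideal_insert_slice:
  assumes X: "X \<subseteq> proj_space s" "finite X" and f: "f \<in> Sd s d" and n: "d + (card X - 1) \<le> n"
  shows "gen_ideal s (insert f (vanishing_ideal s X)) \<inter> Sd s n =
         {g \<in> Sd s n. \<forall>P\<in>{P\<in>X. eval_mpoly f (rep s P) = 0}. eval_mpoly g (rep s P) = 0}"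
    (is "?J \<inter> _ = _")
proof (intro equalityI subsetI)
  fix g assume g: "g \<in> ?J \<inter> Sd s n"
  show "g \<in> {g \<in> Sd s n. \<forall>P\<in>{P\<in>X. eval_mpoly f (rep s P) = 0}. eval_mpoly g (rep s P) = 0}"
  proof (intro CollectI conjI ballI)
    show "g \<in> Sd s n" using g by blast
    fix P assume P: "P \<in> {P\<in>X. eval_mpoly f (rep s P) = 0}"
    have "eval_mpoly h (rep s P) = 0" if "h \<in> insert f (vanishing_ideal s X)" for h
    proof -
      have "h = f \<or> h \<in> vanishing_ideal s X" using that by blast
      then show ?thesis
      proof
        assume "h \<in> vanishing_ideal s X"
        then have "h \<in> Ker s P" using vI_sub_Ker[OF X(1)] P by blast
        then have "phi (rep s P) h = 0" by (simp add: Ker_def)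
        then have "poly (phi (rep s P) h) 1 = 0" by simp
        moreover have "poly (phi (rep s P) h) 1 = eval_mpoly h (rep s P)"
        proof -
          have "phi (rep s P) h = (\<Sum>m\<in>ks h. monom (lk h m * vpow (rep s P) m) (mdeg m))"
            by (simp add: phi_def gev_def mult_monom)
          then show ?thesis by (simp add: poly_sum poly_monom eval_mpoly_def vpow_def)
        qed
        ultimately show ?thesis by simp
      qed (use P in simp)
    qed
    then show "eval_mpoly g (rep s P) = 0" using g gen_ideal_eval by blast
  qed
next
  let ?Z = "{P\<in>X. eval_mpoly f (rep s P) = 0}"
  fix g assume g: "g \<in> {g \<in> Sd s n. \<forall>P\<in>?Z. eval_mpoly g (rep s P) = 0}"
  have nd: "card X - 1 \<le> n - d" using n by simp
  have "\<forall>P\<in>X. \<exists>e. e \<in> Sd s (n - d) \<and> eval_mpoly e (rep s P) = 1 \<and> (\<forall>Q\<in>X - {P}. eval_mpoly e (rep s Q) = 0)"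
    using interpolate[OF X _ nd] by blast
  then obtain e where e: "\<And>P. P \<in> X \<Longrightarrow> e P \<in> Sd s (n - d) \<and> eval_mpoly (e P) (rep s P) = 1 \<and>
      (\<forall>Q\<in>X - {P}. eval_mpoly (e P) (rep s Q) = 0)" by metis
  define h where "h = (\<Sum>P\<in>X - ?Z. kscale (eval_mpoly g (rep s P) / eval_mpoly f (rep s P)) (e P))"
  have h: "h \<in> Sd s (n - d)" unfolding h_def using e by (intro Sd_sum Sd_kscale) auto
  have hf: "h * f \<in> Sd s n" using Sd_mult[OF h f] n by simp
  have evh: "eval_mpoly h (rep s Q) = (if Q \<in> X - ?Z then eval_mpoly g (rep s Q) / eval_mpoly f (rep s Q) else 0)"
    if "Q \<in> X" for Q
  proof -
    have "eval_mpoly h (rep s Q) = (\<Sum>P\<in>X - ?Z. if P = Q then eval_mpoly g (rep s P) / eval_mpoly f (rep s P) else 0)"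
      unfolding h_def eval_sum eval_kscale using e that by (intro sum.cong) auto
    also have "\<dots> = (if Q \<in> X - ?Z then eval_mpoly g (rep s Q) / eval_mpoly f (rep s Q) else 0)"
      using X(2) by (simp add: sum.delta')
    finally show ?thesis .
  qed
  have "g - h * f \<in> vanishing_ideal s X"
  proof -
    have "g - h * f \<in> Sd s n" using g hf by blast
    moreover have "\<forall>Q\<in>X. eval_mpoly (g - h * f) (rep s Q) = 0"
      using evh g by auto
    ultimately show ?thesis using vI_form_iff[OF X(1)] by blast
  qed
  then have "g - h * f \<in> ?J" using gen_ideal_base[of _ "insert f (vanishing_ideal s X)" s] by blast
  moreover have "h * f \<in> ?J"
    using ideal_S_mult[OF gen_ideal_ideal gen_ideal_base[of f] Sd_Pring[OF h]] by blast
  ultimately have "(g - h * f) + h * f \<in> ?J" using ideal_S_add[OF gen_ideal_ideal] by blast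
  then show "g \<in> ?J \<inter> Sd s n" using g by simp
qed

lemma deg_quot_val:
  assumes "krull_dim_quot s J = 1" "\<And>n. N \<le> n \<Longrightarrow> hilbert_fun s J n = c"
  shows "deg_quot s J = real c"
proof -
  have "(\<lambda>d. real (hilbert_fun s J d) / real d ^ (1 - 1)) \<longlonglongrightarrow> real c"
    by (rule tendsto_eventually) (use assms(2) in \<open>auto simp: eventually_sequentially\<close>)
  then show ?thesis unfolding deg_quot_def using assms(1) by (simp add: limI)
qed


section \<open>monomial orders\<close>

context
  fixes s :: nat and ord :: "(nat \<Rightarrow>\<^sub>0 nat) \<Rightarrow> (nat \<Rightarrow>\<^sub>0 nat) \<Rightarrow> bool"
  assumes mo: "monomial_order s ord"
begin

abbreviation "MM \<equiv> {m::nat\<Rightarrow>\<^sub>0nat. ks m \<subseteq> {..<s}}"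

lemma mo_all: "(\<forall>a\<in>MM. \<not> ord a a) \<and>
       (\<forall>a\<in>MM. \<forall>b\<in>MM. \<forall>c\<in>MM. ord a b \<longrightarrow> ord b c \<longrightarrow> ord a c) \<and>
       (\<forall>a\<in>MM. \<forall>b\<in>MM. a = b \<or> ord a b \<or> ord b a) \<and>
       (\<forall>a\<in>MM. \<forall>b\<in>MM. \<forall>c\<in>MM. ord a b \<longrightarrow> ord (a + c) (b + c)) \<and>
       (\<forall>a\<in>MM. a \<noteq> 0 \<longrightarrow> ord 0 a)"
  using mo unfolding monomial_order_def Let_def .

lemma mo_irrefl: "ks a \<subseteq> {..<s} \<Longrightarrow> \<not> ord a a"
  by (rule mo_all[THEN conjunct1, rule_format]) simp

lemma mo_trans: "ks a \<subseteq> {..<s} \<Longrightarrow> ks b \<subseteq> {..<s} \<Longrightarrow> ks c \<subseteq> {..<s} \<Longrightarrow> ord a b \<Longrightarrow> ord b c \<Longrightarrow> ord a c"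
  by (rule mo_all[THEN conjunct2, THEN conjunct1, rule_format]) simp_all

lemma mo_total: "ks a \<subseteq> {..<s} \<Longrightarrow> ks b \<subseteq> {..<s} \<Longrightarrow> a = b \<or> ord a b \<or> ord b a"
  by (rule mo_all[THEN conjunct2, THEN conjunct2, THEN conjunct1, rule_format]) simp_all

lemma mo_add: "ks a \<subseteq> {..<s} \<Longrightarrow> ks b \<subseteq> {..<s} \<Longrightarrow> ks c \<subseteq> {..<s} \<Longrightarrow> ord a b \<Longrightarrow> ord (a + c) (b + c)"
  by (rule mo_all[THEN conjunct2, THEN conjunct2, THEN conjunct2, THEN conjunct1, rule_format]) simp_all

lemma max_exists:
  assumes "finite S" "S \<noteq> {}" "S \<subseteq> MM"
  shows "\<exists>m\<in>S. \<forall>k\<in>S. k \<noteq> m \<longrightarrow> ord k m"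
  using assms
proof (induction S rule: finite_ne_induct)
  case (singleton x) then show ?case by auto
next
  case (insert x F)
  then obtain m where m: "m \<in> F" "\<forall>k\<in>F. k \<noteq> m \<longrightarrow> ord k m" by auto
  have x: "ks x \<subseteq> {..<s}" and mM: "ks m \<subseteq> {..<s}" and FM: "\<forall>k\<in>F. ks k \<subseteq> {..<s}"
    using insert m by auto
  show ?case
  proof (cases "ord m x")
    case True
    have "\<forall>k\<in>insert x F. k \<noteq> x \<longrightarrow> ord k x"
    proof (intro ballI impI)
      fix k assume "k \<in> insert x F" "k \<noteq> x"
      then have "k \<in> F" by auto
      then show "ord k x" using m True mo_trans[OF _ mM x, of k] FM by (cases "k = m") auto
    qed
    then show ?thesis by blast
  next
    case False
    then have "x = m \<or> ord x m" using mo_total[OF x mM] by auto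
    then have "\<forall>k\<in>insert x F. k \<noteq> m \<longrightarrow> ord k m" using m by auto
    then show ?thesis using m(1) by blast
  qed
qed

lemma lead_mono:
  assumes "f \<noteq> 0" "f \<in> Pring s"
  shows "lead_mono ord f \<in> ks f" "\<forall>m'\<in>ks f. m' \<noteq> lead_mono ord f \<longrightarrow> ord m' (lead_mono ord f)"
proof -
  have KM: "ks f \<subseteq> MM" using assms(2) by (auto simp: Pring_def)
  have ne: "ks f \<noteq> {}" using assms(1) by simp
  obtain m where m: "m \<in> ks f" "\<forall>k\<in>ks f. k \<noteq> m \<longrightarrow> ord k m"
    using max_exists[OF finite_keys ne KM] by blast
  have mM: "ks m \<subseteq> {..<s}" using KM m(1) by blast
  have uniq: "m' = m" if m': "m' \<in> ks f" "\<forall>k\<in>ks f. k \<noteq> m' \<longrightarrow> ord k m'" for m'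
  proof (rule ccontr)
    assume ne: "m' \<noteq> m"
    have 1: "ord m' m" using m(2) m'(1) ne by blast
    have ne2: "m \<noteq> m'" using ne by simp
    have 2: "ord m m'" using m'(2) m(1) ne2 by blast
    have m'M: "ks m' \<subseteq> {..<s}" using KM m'(1) by blast
    have "ord m m" using mo_trans[OF mM m'M mM 2 1] .
    then show False using mo_irrefl[OF mM] by blast
  qed
  have "lead_mono ord f = m" unfolding lead_mono_def
  proof (rule the_equality)
    show "m \<in> ks f \<and> (\<forall>m'\<in>ks f. m' \<noteq> m \<longrightarrow> ord m' m)" using m by blast
    show "\<And>x. x \<in> ks f \<and> (\<forall>m'\<in>ks f. m' \<noteq> x \<longrightarrow> ord m' x) \<Longrightarrow> x = m" using uniq by blast
  qed
  then show "lead_mono ord f \<in> ks f" "\<forall>m'\<in>ks f. m' \<noteq> lead_mono ord f \<longrightarrow> ord m' (lead_mono ord f)"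
    using m by auto
qed

end

lemma mono_add_cancel: "(u + y = (u::nat\<Rightarrow>\<^sub>0nat) + x) \<longleftrightarrow> y = x"
  by (metis add_diff_cancel_left')

lemma lookup_shift: "lk (sng u (1::'a::field) * (p::'a mpoly)) (u + x) = lk p x"
proof -
  have "sng u 1 * p = (\<Sum>y\<in>ks p. sng (u + y) (lk p y))"
    by (subst mpoly_sum_singles[of p]) (simp add: sum_distrib_left mult_single)
  then have "lk (sng u 1 * p) (u + x) = (\<Sum>y\<in>ks p. if u + y = u + x then lk p y else 0)"
    by (simp add: lookup_sum lookup_single when_def)
  also have "\<dots> = (\<Sum>y\<in>ks p. if y = x then lk p y else 0)"
    by (rule sum.cong[OF refl]) (simp only: mono_add_cancel)
  also have "\<dots> = lk p x" by (simp add: sum.delta' in_keys_iff)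
  finally show ?thesis .
qed

lemma keys_shift: "ks (sng u (1::'a::field) * (p::'a mpoly)) \<subseteq> (\<lambda>x. u + x) ` ks p"
  using keys_mult[of "sng u 1" p] by auto


lemma init_div:
  assumes "sng m (1::'a::field) \<in> init_ideal s ord I"
  shows "\<exists>f\<in>I. f \<noteq> 0 \<and> (\<exists>u. m = lead_mono ord f + u)"
proof -
  define T :: "'a mpoly set" where "T = {p. \<forall>k\<in>ks p. \<exists>f\<in>I. f \<noteq> 0 \<and> (\<exists>u. k = lead_mono ord f + u)}"
  have "ideal_S s T" unfolding ideal_S_def
  proof (intro conjI ballI)
    show "0 \<in> T" by (simp add: T_def)
  next
    fix a b assume "a \<in> T" "b \<in> T"
    then show "a + b \<in> T" using keys_add[of a b] unfolding T_def by blast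
  next
    fix a r :: "'a mpoly" assume a: "a \<in> T" and "r \<in> Pring s"
    show "r * a \<in> T" unfolding T_def
    proof (rule CollectI, rule ballI)
      fix k assume "k \<in> ks (r * a)"
      then obtain x y where xy: "k = x + y" "y \<in> ks a" using keys_mult[of r a] by blast
      then obtain f u where "f \<in> I" "f \<noteq> 0" "y = lead_mono ord f + u" using a unfolding T_def by blast
      then show "\<exists>f\<in>I. f \<noteq> 0 \<and> (\<exists>u. k = lead_mono ord f + u)" using xy
        by (intro bexI[of _ f] conjI exI[of _ "u + x"]) (simp_all add: add_ac)
    qed
  qed
  moreover have "{sng (lead_mono ord f) 1 | f. f \<in> I \<and> f \<noteq> 0} \<subseteq> T"
    unfolding T_def by (auto intro!: exI[of _ 0])
  ultimately have "init_ideal s ord I \<subseteq> T" unfolding init_ideal_def by (rule gen_ideal_least[rotated])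
  then have "sng m (1::'a) \<in> T" using assms by blast
  then show ?thesis unfolding T_def by simp
qed

lemma init_gen:
  assumes "f \<in> I" "f \<noteq> 0"
  shows "sng (lead_mono ord f) (1::'a::field) \<in> init_ideal s ord I"
  unfolding init_ideal_def using assms by (intro gen_ideal_base) blast


lemma lookup_kscale: "lk (kscale c p) k = c * lk p k"
  by (simp add: kscale_def map.rep_eq when_def)

lemma keys_kscale: "ks (kscale c p) \<subseteq> ks p"
  by (auto simp: in_keys_iff lookup_kscale)

lemma vI_ideal: "ideal_S s (vanishing_ideal s X)"
  by (simp add: vanishing_ideal_def gen_ideal_ideal)

context
  fixes s :: nat and ord :: "(nat \<Rightarrow>\<^sub>0 nat) \<Rightarrow> (nat \<Rightarrow>\<^sub>0 nat) \<Rightarrow> bool"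
    and X :: "(nat \<Rightarrow> 'a::field) set set"
  assumes mo: "monomial_order s ord" and X: "X \<subseteq> proj_space s"
begin

lemma reducer:
  assumes m: "ks m \<subseteq> {..<s}" "mdeg m = d" "sng m (1::'a) \<in> init_ideal s ord (vanishing_ideal s X)"
  shows "\<exists>h. h \<in> vanishing_ideal s X \<and> h \<in> Sd s d \<and> lk h m \<noteq> 0 \<and> (\<forall>k\<in>ks h. k \<noteq> m \<longrightarrow> ord k m)"
proof -
  obtain f u where f: "f \<in> vanishing_ideal s X" "f \<noteq> 0" "m = lead_mono ord f + u"
    using init_div[OF m(3)] by blast
  define a where "a = lead_mono ord f"
  have fP: "f \<in> Pring s" using f(1) vI_Pring by blast
  have a: "a \<in> ks f" "\<forall>m'\<in>ks f. m' \<noteq> a \<longrightarrow> ord m' a"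
    using lead_mono[OF mo f(2) fP] unfolding a_def by auto
  have aM: "ks a \<subseteq> {..<s}" using fP a(1) by (auto simp: Pring_def)
  have ma: "m = a + u" using f(3) a_def by simp
  have uM: "ks u \<subseteq> {..<s}" using m(1) ma by (simp add: keys_add_nat)
  define fk where "fk = hc (mdeg a) f"
  have fkI: "fk \<in> vanishing_ideal s X" unfolding fk_def using vI_hc[OF X f(1)] .
  have fkS: "fk \<in> Sd s (mdeg a)" unfolding fk_def using hc_Sd[OF fP] .
  have akeys: "a \<in> ks fk" using a(1) by (simp add: fk_def keys_hc)
  have fkkeys: "ks fk \<subseteq> ks f" by (auto simp: fk_def keys_hc)
  define h where "h = sng u 1 * fk"
  have "sng u (1::'a) \<in> Sd s (mdeg u)" using uM by (intro Sd_single) auto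
  then have "h \<in> Sd s (mdeg u + mdeg a)" unfolding h_def using Sd_mult[OF _ fkS] by blast
  moreover have "mdeg u + mdeg a = d" using m(2) ma by (simp add: mdeg_add)
  ultimately have hS: "h \<in> Sd s d" by simp
  have hI: "h \<in> vanishing_ideal s X" unfolding h_def
    using ideal_S_mult[OF vI_ideal fkI] uM by (simp add: Pring_single)
  have "lk h m = lk fk a" unfolding h_def ma by (simp add: add.commute[of a u] lookup_shift)
  then have hm: "lk h m \<noteq> 0" using akeys by (simp add: in_keys_iff)
  have hk: "\<forall>k\<in>ks h. k \<noteq> m \<longrightarrow> ord k m"
  proof (intro ballI impI)
    fix k assume k: "k \<in> ks h" "k \<noteq> m"
    then obtain x where x: "x \<in> ks fk" "k = u + x" using keys_shift[of u fk] unfolding h_def by blast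
    have "x \<noteq> a" using x k(2) ma by (auto simp: add.commute)
    then have "ord x a" using a(2) x(1) fkkeys by blast
    moreover have "ks x \<subseteq> {..<s}" using fP x(1) fkkeys by (auto simp: Pring_def)
    ultimately have "ord (x + u) (a + u)" using mo_add[OF mo _ aM uM] by blast
    then show "ord k m" using x(2) ma by (simp add: add.commute)
  qed
  show ?thesis using hI hS hm hk by blast
qed


definition NS :: "'a mpoly \<Rightarrow> (nat \<Rightarrow>\<^sub>0 nat) set" where
  "NS g = {k\<in>ks g. sng k (1::'a) \<in> init_ideal s ord (vanishing_ideal s X)}"

definition UU :: "nat \<Rightarrow> 'a mpoly \<Rightarrow> (nat \<Rightarrow>\<^sub>0 nat) set" where
  "UU d g = {n\<in>Mon s d. \<exists>k\<in>NS g. n = k \<or> ord n k}"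

lemma reduce_step:
  assumes g: "g \<in> Sd s d" and ne: "NS g \<noteq> {}"
  shows "\<exists>g'. g' \<in> Sd s d \<and> g - g' \<in> vanishing_ideal s X \<and> card (UU d g') < card (UU d g)"
proof -
  have gM: "ks g \<subseteq> Mon s d" using g by (auto simp: Sd_def Pring_def Mon_def)
  have NSM: "NS g \<subseteq> {m. ks m \<subseteq> {..<s}}" using gM by (auto simp: NS_def Mon_def)
  obtain m where m: "m \<in> NS g" "\<forall>k\<in>NS g. k \<noteq> m \<longrightarrow> ord k m"
    using max_exists[OF mo _ ne NSM] by (auto simp: NS_def)
  have mMon: "m \<in> Mon s d" using m(1) gM by (auto simp: NS_def)
  then have mM: "ks m \<subseteq> {..<s}" "mdeg m = d" by (auto simp: Mon_def)
  obtain h where h: "h \<in> vanishing_ideal s X" "h \<in> Sd s d" "lk h m \<noteq> 0" "\<forall>k\<in>ks h. k \<noteq> m \<longrightarrow> ord k m"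
    using reducer[OF mM] m(1) by (auto simp: NS_def)
  define c where "c = lk g m / lk h m"
  define g' where "g' = g - kscale c h"
  have g'S: "g' \<in> Sd s d" unfolding g'_def using g h(2) by blast
  have diff: "g - g' \<in> vanishing_ideal s X" unfolding g'_def
    using ideal_S_mult[OF vI_ideal h(1), of "sng 0 c"] by (simp add: kscale_mult Pring_single)
  have g'm: "lk g' m = 0" unfolding g'_def c_def using h(3) by (simp add: lookup_minus lookup_kscale)
  have ordk: "ord k m" if k: "k \<in> NS g'" for k
  proof -
    have kk: "k \<in> ks g'" "sng k (1::'a) \<in> init_ideal s ord (vanishing_ideal s X)" using k by (auto simp: NS_def)
    have "k \<noteq> m" using kk(1) g'm by (auto simp: in_keys_iff)
    have "ks g' \<subseteq> ks g \<union> ks h" unfolding g'_def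
      by (auto simp: in_keys_iff lookup_minus lookup_kscale)
    then have "k \<in> ks g \<or> k \<in> ks h" using kk(1) by blast
    then show "ord k m"
    proof
      assume "k \<in> ks g"
      then have "k \<in> NS g" using kk(2) by (simp add: NS_def)
      then show ?thesis using m(2) \<open>k \<noteq> m\<close> by blast
    qed (use h(4) \<open>k \<noteq> m\<close> in blast)
  qed
  have g'M: "ks g' \<subseteq> Mon s d" using g'S by (auto simp: Sd_def Pring_def Mon_def)
  have sub: "UU d g' \<subseteq> UU d g - {m}"
  proof
    fix n assume n: "n \<in> UU d g'"
    then obtain k where k: "n \<in> Mon s d" "k \<in> NS g'" "n = k \<or> ord n k" by (auto simp: UU_def)
    have kM: "ks k \<subseteq> {..<s}" using k(2) g'M by (auto simp: NS_def Mon_def)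
    have nM: "ks n \<subseteq> {..<s}" using k(1) by (auto simp: Mon_def)
    have "ord n m" using k(3) ordk[OF k(2)] mo_trans[OF mo nM kM mM(1)] by blast
    then have "n \<noteq> m" using mo_irrefl[OF mo mM(1)] by blast
    moreover have "n \<in> UU d g" using k(1) m(1) \<open>ord n m\<close> by (auto simp: UU_def)
    ultimately show "n \<in> UU d g - {m}" by blast
  qed
  have "m \<in> UU d g" using mMon m(1) by (auto simp: UU_def)
  moreover have "finite (UU d g)" using finite_Mon[of s d] by (rule finite_subset[rotated]) (auto simp: UU_def)
  ultimately have "card (UU d g') < card (UU d g)"
    using sub by (meson card_Diff1_less card_mono finite_Diff le_less_trans)
  then show ?thesis using g'S diff by blast
qed

lemma normal_form:
  assumes "g \<in> Sd s d"
  shows "\<exists>f. ks f \<subseteq> std_monos s ord (vanishing_ideal s X) d \<and> g - f \<in> vanishing_ideal s X"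
proof -
  have "\<forall>g. g \<in> Sd s d \<longrightarrow> card (UU d g) = N \<longrightarrow>
      (\<exists>f. ks f \<subseteq> std_monos s ord (vanishing_ideal s X) d \<and> g - f \<in> vanishing_ideal s X)" for N
  proof (induction N rule: less_induct)
    case (less N)
    show ?case
    proof (intro allI impI)
      fix g assume g: "g \<in> Sd s d" "card (UU d g) = N"
      show "\<exists>f. ks f \<subseteq> std_monos s ord (vanishing_ideal s X) d \<and> g - f \<in> vanishing_ideal s X"
      proof (cases "NS g = {}")
        case True
        have "ks g \<subseteq> std_monos s ord (vanishing_ideal s X) d"
          using True g(1) by (auto simp: NS_def std_monos_def Sd_def Pring_def)
        moreover have "g - g \<in> vanishing_ideal s X" using ideal_S_zero[OF vI_ideal] by simp
        ultimately show ?thesis by blast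
      next
        case False
        obtain g' where g': "g' \<in> Sd s d" "g - g' \<in> vanishing_ideal s X" "card (UU d g') < card (UU d g)"
          using reduce_step[OF g(1) False] by blast
        obtain f where f: "ks f \<subseteq> std_monos s ord (vanishing_ideal s X) d" "g' - f \<in> vanishing_ideal s X"
          using less[of "card (UU d g')"] g' g(2) by blast
        have "(g - g') + (g' - f) \<in> vanishing_ideal s X" using ideal_S_add[OF vI_ideal g'(2) f(2)] .
        then show ?thesis using f(1) by auto
      qed
    qed
  qed
  then show ?thesis using assms by blast
qed

end


definition ZZ :: "nat \<Rightarrow> (nat \<Rightarrow> 'a::field) set set \<Rightarrow> 'a mpoly \<Rightarrow> (nat \<Rightarrow> 'a) set set" where
  "ZZ s X f = {P\<in>X. eval_mpoly f (rep s P) = 0}"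

context
  fixes s :: nat and ord :: "(nat \<Rightarrow>\<^sub>0 nat) \<Rightarrow> (nat \<Rightarrow>\<^sub>0 nat) \<Rightarrow> bool"
    and X :: "(nat \<Rightarrow> 'a::{finite,field}) set set" and d :: nat
  assumes mo: "monomial_order s ord" and X: "X \<subseteq> proj_space s" and finX: "finite X"
begin

abbreviation "II \<equiv> vanishing_ideal s X"

lemma zeros_eq: "f \<in> Sd s e \<Longrightarrow> zeros_in X f = ZZ s X f"
  using vanishes_form[of _ s f e] X by (auto simp: zeros_in_def ZZ_def)

lemma std_Mon: "std_monos s ord (II :: 'a mpoly set) d \<subseteq> Mon s d"
  by (auto simp: std_monos_def Mon_def)

lemma keys_std_Sd: "ks f \<subseteq> std_monos s ord II d \<Longrightarrow> f \<in> Sd s d"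
  by (auto simp: std_monos_def Sd_def Pring_def)

lemma F_props:
  assumes f: "f \<in> F_set s ord II d"
  shows "f \<in> Sd s d" "f \<notin> II" "ZZ s X f \<noteq> {}"
proof -
  have k: "ks f \<subseteq> std_monos s ord II d" "f \<noteq> 0" "colon_ideal s II f \<noteq> II"
    using f by (auto simp: F_set_def)
  show fS: "f \<in> Sd s d" using keys_std_Sd[OF k(1)] .
  show "f \<notin> II"
  proof
    assume "f \<in> II"
    then have "sng (lead_mono ord f) (1::'a) \<in> init_ideal s ord II" using init_gen k(2) by blast
    moreover have "lead_mono ord f \<in> ks f" using lead_mono(1)[OF mo k(2) Sd_Pring[OF fS]] .
    ultimately show False using k(1) by (auto simp: std_monos_def)
  qed
  show "ZZ s X f \<noteq> {}"
  proof
    assume "ZZ s X f = {}"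
    then have "\<forall>P\<in>X. eval_mpoly f (rep s P) \<noteq> 0" by (auto simp: ZZ_def)
    then show False using colon_nonvanishing[OF X fS] k(3) by blast
  qed
qed

lemma nf_in_F:
  assumes g: "g \<in> Sd s d" "g \<notin> II" "ZZ s X g \<noteq> {}"
  shows "\<exists>f\<in>F_set s ord II d. ZZ s X f = ZZ s X g"
proof -
  obtain f where f: "ks f \<subseteq> std_monos s ord II d" "g - f \<in> II"
    using normal_form[OF mo X g(1)] by blast
  have fS: "f \<in> Sd s d" using keys_std_Sd[OF f(1)] .
  have "\<forall>P\<in>X. eval_mpoly (g - f) (rep s P) = 0"
    using vI_form_iff[OF X, of "g - f" d] f(2) g(1) fS by blast
  then have ev: "\<forall>P\<in>X. eval_mpoly f (rep s P) = eval_mpoly g (rep s P)" by simp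
  then have Zeq: "ZZ s X f = ZZ s X g" by (auto simp: ZZ_def)
  have "f \<noteq> 0" using f(2) g(2) by auto
  moreover obtain P where "P \<in> X" "eval_mpoly f (rep s P) = 0" using g(3) Zeq by (auto simp: ZZ_def)
  then have "colon_ideal s II f \<noteq> II" using colon_vanishing[OF X finX fS] by blast
  ultimately have "f \<in> F_set s ord II d" using f(1) by (simp add: F_set_def)
  then show ?thesis using Zeq by blast
qed

lemma deg_I: "X \<noteq> {} \<Longrightarrow> deg_quot s II = real (card X)"
proof -
  assume "X \<noteq> {}"
  then obtain P where P: "P \<in> X" by blast
  have k: "krull_dim_quot s II = 1"
    by (rule krull_one[OF X finX order.refl P vI_sub_Ker[OF X P]])
  show ?thesis
  proof (rule deg_quot_val[OF k])
    fix n assume "card X - 1 \<le> n"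
    then show "hilbert_fun s II n = card X"
      by (rule hilbert_eq[OF X finX order.refl _ vI_slice[OF X]])
  qed
qed

lemma deg_If:
  assumes f: "f \<in> F_set s ord II d"
  shows "deg_quot s (gen_ideal s (insert f II)) = real (card (ZZ s X f))"
proof -
  note fp = F_props[OF f]
  obtain P where P: "P \<in> X" "eval_mpoly f (rep s P) = 0" using fp(3) by (auto simp: ZZ_def)
  have sub1: "II \<subseteq> gen_ideal s (insert f II)" using gen_ideal_base by blast
  have sub2: "gen_ideal s (insert f II) \<subseteq> Ker s P"
  proof (rule gen_ideal_least[OF _ ideal_Ker])
    have "f \<in> Ker s P" using fp(1) P(2) by (simp add: Ker_def phi_form Sd_Pring)
    then show "insert f II \<subseteq> Ker s P" using vI_sub_Ker[OF X P(1)] by blast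
  qed
  have k: "krull_dim_quot s (gen_ideal s (insert f II)) = 1"
    by (rule krull_one[OF X finX sub1 P(1) sub2])
  show ?thesis
  proof (rule deg_quot_val[OF k])
    fix n assume n: "d + (card X - 1) \<le> n"
    show "hilbert_fun s (gen_ideal s (insert f II)) n = card (ZZ s X f)"
      unfolding ZZ_def
      by (rule hilbert_eq[OF X finX _ _ gen_ideal_insert_slice[OF X finX fp(1) n]]) (use n in auto)
  qed
qed

lemma finite_F: "finite (F_set s ord II d)"
proof -
  have "F_set s ord II d \<subseteq> {p. ks p \<subseteq> std_monos s ord II d}" by (auto simp: F_set_def)
  moreover have "finite {p :: 'a mpoly. ks p \<subseteq> std_monos s ord II d}"
    by (rule finite_polys_keys) (rule finite_subset[OF std_Mon finite_Mon])
  ultimately show ?thesis by (rule finite_subset)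
qed

end


lemma exists_zd:
  assumes X: "X \<subseteq> proj_space s" and c: "card X \<ge> 2" and d: "d \<ge> 1"
  shows "\<exists>g. g \<in> Sd s d \<and> g \<notin> vanishing_ideal s X \<and> ZZ s X g \<noteq> {}"
proof -
  have "X \<noteq> {}" using c by auto
  then obtain P where P: "P \<in> X" by blast
  have "card (X - {P}) \<ge> 1" using c P by (simp add: card_Diff_singleton_if)
  then have "X - {P} \<noteq> {}" by (intro notI) simp
  then obtain Q where Q: "Q \<in> X" "Q \<noteq> P" by blast
  have PP: "P \<in> proj_space s" and QP: "Q \<in> proj_space s" using P Q X by auto
  obtain L where L: "L \<in> Sd s 1" "eval_mpoly L (rep s P) = 0" "eval_mpoly L (rep s Q) \<noteq> 0"
    using separate[OF PP QP] Q(2) by metis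
  obtain j where j: "j < s" "rep s Q j \<noteq> 0" using rep_nz[OF QP] by blast
  define g where "g = L * var j (d - 1)"
  have "g \<in> Sd s (1 + (d - 1))" unfolding g_def using Sd_mult[OF L(1) var_Sd[OF j(1)]] .
  then have gS: "g \<in> Sd s d" using d by simp
  have "eval_mpoly g (rep s Q) \<noteq> 0" using L(3) j(2) by (simp add: g_def)
  then have "g \<notin> vanishing_ideal s X" using vI_form_iff[OF X gS] Q(1) by blast
  moreover have "P \<in> ZZ s X g" using P L(2) by (simp add: ZZ_def g_def)
  ultimately show ?thesis using gS by blast
qed

theorem corollary4p8:
  fixes s :: nat
    and X :: "(nat \<Rightarrow> 'a::{finite,field}) set set"
    and ord :: "(nat \<Rightarrow>\<^sub>0 nat) \<Rightarrow> (nat \<Rightarrow>\<^sub>0 nat) \<Rightarrow> bool"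
    and d :: nat
  assumes "X \<subseteq> proj_space s"
    and "card X \<ge> 2"
    and "monomial_order s ord"
    and "d \<ge> 1"
  shows "real (min_dist s X d) =
           deg_quot s (vanishing_ideal s X)
           - Max {deg_quot s (gen_ideal s (insert f (vanishing_ideal s X))) | f.
                    f \<in> F_set s ord (vanishing_ideal s X) d}
         \<and> min_dist s X d \<ge> 1"
proof -
  note X = assms(1) and mo = assms(3)
  have finX: "finite X" using assms(2) by (intro card_ge_0_finite) auto
  have Xne: "X \<noteq> {}" using assms(2) by auto
  let ?I = "vanishing_ideal s X"
  let ?F = "F_set s ord ?I d"
  let ?cz = "\<lambda>f. card (ZZ s X f)"
  have finF: "finite ?F" using finite_F[OF mo X finX] .
  obtain g0 where g0: "g0 \<in> Sd s d" "g0 \<notin> ?I" "ZZ s X g0 \<noteq> {}"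
    using exists_zd[OF X assms(2,4)] by blast
  obtain f1 where f1: "f1 \<in> ?F" using nf_in_F[OF mo X finX g0] by blast
  then have Fne: "?F \<noteq> {}" by blast
  define Mx where "Mx = Max (?cz ` ?F)"
  have Mx_in: "Mx \<in> ?cz ` ?F" unfolding Mx_def using finF Fne by (intro Max_in) auto
  then obtain f0 where f0: "f0 \<in> ?F" "?cz f0 = Mx" by blast
  have Mx_ge: "?cz f \<le> Mx" if "f \<in> ?F" for f unfolding Mx_def using finF that by (intro Max_ge) auto
  note f0p = F_props[OF mo X finX f0(1)]
  have "\<exists>P\<in>X. eval_mpoly f0 (rep s P) \<noteq> 0" using vI_form_iff[OF X f0p(1)] f0p(2) by blast
  then have "ZZ s X f0 \<subset> X" unfolding ZZ_def by blast
  then have Mx_lt: "Mx < card X" using f0(2) psubset_card_mono[OF finX] by blast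
  have maxeq: "Max {deg_quot s (gen_ideal s (insert f ?I)) | f. f \<in> ?F} = real Mx"
  proof -
    have "{deg_quot s (gen_ideal s (insert f ?I)) | f. f \<in> ?F} = (\<lambda>f. deg_quot s (gen_ideal s (insert f ?I))) ` ?F"
      by blast
    also have "\<dots> = (\<lambda>f. real (?cz f)) ` ?F"
      by (rule image_cong[OF refl]) (rule deg_If[OF mo X finX])
    finally have S: "{deg_quot s (gen_ideal s (insert f ?I)) | f. f \<in> ?F} = (\<lambda>f. real (?cz f)) ` ?F" .
    show ?thesis unfolding S
    proof (rule Max_eqI)
      show "finite ((\<lambda>f. real (?cz f)) ` ?F)" using finF by simp
      show "\<And>y. y \<in> (\<lambda>f. real (?cz f)) ` ?F \<Longrightarrow> y \<le> real Mx" using Mx_ge by auto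
      show "real Mx \<in> (\<lambda>f. real (?cz f)) ` ?F" using f0 by force
    qed
  qed
  have mineq: "min_dist s X d = card X - Mx"
    unfolding min_dist_def
  proof (rule Min_eqI)
    show "finite {card X - card (zeros_in X f) | f. f \<in> (Sd s d :: 'a mpoly set) \<and> f \<notin> ?I}"
      by (rule finite_subset[of _ "{..card X}"]) auto
  next
    fix y assume "y \<in> {card X - card (zeros_in X f) | f. f \<in> (Sd s d :: 'a mpoly set) \<and> f \<notin> ?I}"
    then obtain g where g: "y = card X - card (zeros_in X g)" "g \<in> Sd s d" "g \<notin> ?I" by blast
    have "card (ZZ s X g) \<le> Mx"
    proof (cases "ZZ s X g = {}")
      case False
      then obtain f where "f \<in> ?F" "ZZ s X f = ZZ s X g" using nf_in_F[OF mo X finX g(2,3)] by blast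
      then show ?thesis using Mx_ge by metis
    qed simp
    then show "card X - Mx \<le> y" using g(1) zeros_eq[OF mo X finX g(2)] by simp
  next
    show "card X - Mx \<in> {card X - card (zeros_in X f) | f. f \<in> (Sd s d :: 'a mpoly set) \<and> f \<notin> ?I}"
      using f0 f0p zeros_eq[OF mo X finX f0p(1)] by auto
  qed
  show ?thesis
    using mineq maxeq deg_I[OF mo X finX Xne] Mx_lt by (simp add: of_nat_diff)
qed


end
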